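(* Let $\alpha=\sum_{c\in C}w_c$, so that $\mathcal{C}_\sigma:[-1,1]^n\times\mathbb{R}^m\to[-\alpha,\alpha]$, with $\sigma>0$. Let $\beta$ be the maximum number of occurrences of any single continuous variable within a constraint, and $\gamma=\frac{\sqrt2\,\beta}{\sqrt\pi\,\sigma}$. Then for any $(a',b'),(a,b)\in[-1,1]^n\times\mathbb{R}^m$, $$|\mathcal{C}_\sigma(a',b')-\mathcal{C}_\sigma(a,b)|\le\rho\big(\|a'-a\|^2+\|b'-b\|^2\big)^{1/2},\qquad \|\nabla\mathcal{C}_\sigma(a',b')-\nabla\mathcal{C}_\sigma(a,b)\|\le L\big(\|a'-a\|^2+\|b'-b\|^2\big)^{1/2},$$ where $\rho=\alpha\sqrt{n+m}\max(1,\gamma)$ and $L=\sqrt{n+m\gamma^2}\,\rho$. As a consequence, $$\Big|\mathcal{C}_\sigma(a',b')-\mathcal{C}_\sigma(a,b)-\langle\nabla_a\mathcal{C}_\sigma(a,b),a'-a\rangle-\langle\nabla_b\mathcal{C}_\sigma(a,b),b'-b\rangle\Big|\le\frac L2\big(\|a'-a\|^2+\|b'-b\|^2\big).$$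
   Context: Truth values: $-1$ = True, $+1$ = False. Propositional variables $x\in\{\pm1\}^n$, real variables $y\in\mathbb{R}^m$; atoms $\alpha_i:\ \sum_j q_{i,j}y_j-q_{i,0}\bowtie_i0$ ($i=1,\dots,k$, coefficient vector $q_i=(q_{i,1},\dots,q_{i,m})\neq0$) with $\delta_i(y)=-1$ if $\alpha_i$ holds at $y$, else $+1$. $C$ is a finite set of constraints (Boolean combinations of propositional variables and atoms) with weights $w_c>0$; $c$ is represented by $f_c(x,y)=\tilde f_c(x,\delta(y))\in\{\pm1\}$ ($-1$ iff true) with coefficients $\hat f_c(S,T)=\mathbb{E}_{(x,z)\text{ uniform on }\{\pm1\}^{n+k}}[\tilde f_c(x,z)\prod_{i\in S}x_i\prod_{i\in T}z_i]$. Let $d_i(b)=\mathbb{E}_{y\sim\mathcal{N}(b,\sigma^2I)}[\delta_i(y)]$, which for an atom $\sum_j q_{i,j}y_j\le q_{i,0}$ equals $\mathrm{erf}\big((\sum_jq_{i,j}b_j-q_{i,0})/(\sqrt2\|q_i\|\sigma)\big)$. The smoothed objective is $\mathcal{C}_\sigma(a,b)=\sum_{c\in C}w_c\sum_{S\subseteq[n],T\subseteq[k]}\hat f_c(S,T)\prod_{i\in S}a_i\prod_{i\in T}d_i(b)$. "Occurrences of a variable $y_j$ within a constraint" means the number of atoms of that constraint in which $y_j$ has nonzero coefficient. *)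

theory Defs
  imports "HOL-Analysis.Analysis"
begin

definition erf :: "real \<Rightarrow> real" where
  "erf x = 2 / sqrt pi *
     (if 0 \<le> x then integral {0..x} (\<lambda>t. exp (- t\<^sup>2))
      else - integral {x..0} (\<lambda>t. exp (- t\<^sup>2)))"

text \<open>Comparison operator of an atom  q . y - q0  (rel)  0.\<close>
datatype cmp = Le | Lt | Ge | Gt | Eq | Neq

text \<open>d_i(b) = E_{y ~ N(b, sigma^2 I)} [delta_i(y)], where delta_i(y) = -1 iff the atom holds.\<close>
definition atom_mean ::
  "real \<Rightarrow> cmp \<Rightarrow> real ^ 'm \<Rightarrow> real \<Rightarrow> real ^ 'm \<Rightarrow> real" where
  "atom_mean \<sigma> r q q0 b =
     (let u = erf ((q \<bullet> b - q0) / (sqrt 2 * norm q * \<sigma>)) in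
      (case r of Le \<Rightarrow> u | Lt \<Rightarrow> u | Ge \<Rightarrow> - u | Gt \<Rightarrow> - u | Eq \<Rightarrow> 1 | Neq \<Rightarrow> -1))"

definition cubeN :: "('n::finite \<Rightarrow> real) set" where
  "cubeN = PiE UNIV (\<lambda>_. {-1, 1})"

definition cubeK :: "nat \<Rightarrow> (nat \<Rightarrow> real) set" where
  "cubeK k = PiE {..<k} (\<lambda>_. {-1, 1})"

definition fourier_coeff ::
  "nat \<Rightarrow> (('n::finite \<Rightarrow> real) \<Rightarrow> (nat \<Rightarrow> real) \<Rightarrow> real) \<Rightarrow> 'n set \<Rightarrow> nat set \<Rightarrow> real" where
  "fourier_coeff k f S T =
     (\<Sum>x\<in>cubeN. \<Sum>z\<in>cubeK k. f x z * (\<Prod>i\<in>S. x i) * (\<Prod>i\<in>T. z i))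
       / 2 ^ (CARD('n) + k)"

definition smoothed_obj ::
  "real \<Rightarrow> nat \<Rightarrow> (nat \<Rightarrow> cmp) \<Rightarrow> (nat \<Rightarrow> real ^ 'm) \<Rightarrow> (nat \<Rightarrow> real)
   \<Rightarrow> 'c set \<Rightarrow> ('c \<Rightarrow> real) \<Rightarrow> ('c \<Rightarrow> ('n::finite \<Rightarrow> real) \<Rightarrow> (nat \<Rightarrow> real) \<Rightarrow> real)
   \<Rightarrow> (real ^ 'n) \<times> (real ^ 'm) \<Rightarrow> real" where
  "smoothed_obj \<sigma> k rel q q0 C w f p =
     (\<Sum>c\<in>C. w c * (\<Sum>S\<in>Pow (UNIV :: 'n set). \<Sum>T\<in>Pow {..<k}.
        fourier_coeff k (f c) S T * (\<Prod>i\<in>S. fst p $ i)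
          * (\<Prod>i\<in>T. atom_mean \<sigma> (rel i) (q i) (q0 i) (snd p))))"

definition grad :: "('a::real_inner \<Rightarrow> real) \<Rightarrow> 'a \<Rightarrow> 'a" where
  "grad f x = (SOME g. (f has_derivative (\<lambda>h. g \<bullet> h)) (at x))"

end

theory Submission
  imports Defs "HOL-Probability.Distributions"
begin


definition erfd :: "real \<Rightarrow> real" where "erfd x = 2 / sqrt pi * exp (- x\<^sup>2)"
definition erfdd :: "real \<Rightarrow> real" where "erfdd x = 2 / sqrt pi * (- 2 * x) * exp (- x\<^sup>2)"

lemma gauss_cont: "continuous_on S (\<lambda>t::real. exp (- t\<^sup>2))"
  by (intro continuous_intros)

lemma gauss_int: "(\<lambda>t::real. exp (- t\<^sup>2)) integrable_on {a..b}"
  by (intro integrable_continuous_interval gauss_cont)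

lemma erf_deriv_raw: "(erf has_real_derivative erfd x) (at x)"
proof -
  define R where "R = \<bar>x\<bar> + 1"
  define g where "g = (\<lambda>t::real. exp (- t\<^sup>2))"
  define F where "F = (\<lambda>u. 2 / sqrt pi * (integral {-R..u} g - integral {-R..0} g))"
  have eq: "erf u = F u" if "u \<in> {-R<..<R}" for u
  proof (cases "0 \<le> u")
    case True
    have "integral {-R..0} g + integral {0..u} g = integral {-R..u} g"
      using that True by (intro Henstock_Kurzweil_Integration.integral_combine) (auto simp: R_def g_def gauss_int)
    then have "integral {0..u} g = integral {-R..u} g - integral {-R..0} g" by linarith
    then show ?thesis using True unfolding erf_def F_def g_def by simp
  next
    case False
    have "integral {-R..u} g + integral {u..0} g = integral {-R..0} g"
      using that False by (intro Henstock_Kurzweil_Integration.integral_combine) (auto simp: R_def g_def gauss_int)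
    then have "integral {u..0} g = integral {-R..0} g - integral {-R..u} g" by linarith
    then show ?thesis using False unfolding erf_def F_def g_def by simp
  qed
  have "((\<lambda>u. integral {-R..u} g) has_vector_derivative g x) (at x within {-R..R})"
    by (rule integral_has_vector_derivative) (auto simp: g_def gauss_cont R_def)
  then have "((\<lambda>u. integral {-R..u} g) has_vector_derivative g x) (at x within {-R<..<R})"
    by (rule has_vector_derivative_within_subset) auto
  then have "((\<lambda>u. integral {-R..u} g) has_vector_derivative g x) (at x)"
    by (subst (asm) has_vector_derivative_within_open) (auto simp: R_def)
  then have d: "((\<lambda>u. integral {-R..u} g) has_real_derivative g x) (at x)"
    by (simp add: has_real_derivative_iff_has_vector_derivative)
  have "(F has_real_derivative (2 / sqrt pi * (g x - 0))) (at x)"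
    unfolding F_def by (intro DERIV_cmult DERIV_diff d DERIV_const)
  then have "(F has_real_derivative erfd x) (at x)" by (simp add: erfd_def g_def)
  then show ?thesis
    by (rule has_field_derivative_transform_within_open[where S="{-R<..<R}"])
       (auto simp: R_def eq)
qed

lemma erf_deriv [derivative_intros]:
  "(f has_real_derivative f') (at x within S) \<Longrightarrow>
   ((\<lambda>x. erf (f x)) has_real_derivative (erfd (f x) * f')) (at x within S)"
  using DERIV_chain2[OF erf_deriv_raw] by blast

lemma erfd_raw: "(erfd has_real_derivative erfdd x) (at x)"
proof -
  have "((\<lambda>x. s * exp (- x\<^sup>2)) has_real_derivative s * (- 2 * x) * exp (- x\<^sup>2)) (at x)" for s :: real
    by (auto intro!: derivative_eq_intros simp: algebra_simps)
  from this[of "2 / sqrt pi"]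
  show ?thesis unfolding erfd_def[abs_def] erfdd_def by simp
qed

lemma erfd_deriv [derivative_intros]:
  "(f has_real_derivative f') (at x within S) \<Longrightarrow>
   ((\<lambda>x. erfd (f x)) has_real_derivative (erfdd (f x) * f')) (at x within S)"
  using DERIV_chain2[OF erfd_raw] by blast

lemma gauss_half: "integral {0..} (\<lambda>t::real. exp (- t\<^sup>2)) = sqrt pi / 2"
  and gauss_half_int: "(\<lambda>t::real. exp (- t\<^sup>2)) integrable_on {0..}"
proof -
  have g0: "has_bochner_integral lborel (\<lambda>x::real. indicator {0..} x * exp (- x\<^sup>2)) (sqrt pi / 2)"
    using gaussian_moment_0 by simp
  have h: "integrable lborel (\<lambda>x::real. indicator {0..} x * exp (- x\<^sup>2))"
    "integral\<^sup>L lborel (\<lambda>x::real. indicator {0..} x * exp (- x\<^sup>2)) = sqrt pi / 2"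
    using g0 by (auto simp: has_bochner_integral_iff)
  have "((\<lambda>x::real. indicator {0..} x * exp (- x\<^sup>2)) has_integral sqrt pi / 2) UNIV"
    using has_integral_integral_lborel[OF h(1)] h(2) by simp
  moreover have "(\<lambda>x::real. indicator {0..} x * exp (- x\<^sup>2)) = (\<lambda>x. if x \<in> {0..} then exp (- x\<^sup>2) else 0)"
    by (auto simp: indicator_def)
  ultimately have "((\<lambda>x::real. if x \<in> {0..} then exp (- x\<^sup>2) else 0) has_integral sqrt pi / 2) UNIV"
    by simp
  then have "((\<lambda>t::real. exp (- t\<^sup>2)) has_integral sqrt pi / 2) {0..}"
    by (rule has_integral_restrict_UNIV[THEN iffD1])
  then show "integral {0..} (\<lambda>t::real. exp (- t\<^sup>2)) = sqrt pi / 2"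
    and "(\<lambda>t::real. exp (- t\<^sup>2)) integrable_on {0..}"
    by (auto simp: integral_unique has_integral_integrable)
qed

lemma gauss_le: "0 \<le> x \<Longrightarrow> integral {0..x} (\<lambda>t::real. exp (- t\<^sup>2)) \<le> sqrt pi / 2"
  using integral_subset_le[of "{0..x}" "{0..}" "\<lambda>t::real. exp (- t\<^sup>2)"]
  by (auto simp: gauss_half gauss_half_int gauss_int)

lemma gauss_nonneg: "0 \<le> integral {a..b} (\<lambda>t::real. exp (- t\<^sup>2))"
  by (rule integral_nonneg) (auto simp: gauss_int)

lemma gauss_sym: "integral {-x..0} (\<lambda>t::real. exp (- t\<^sup>2)) = integral {0..x} (\<lambda>t::real. exp (- t\<^sup>2))"
proof -
  show ?thesis using Henstock_Kurzweil_Integration.integral_reflect_real[where a=0 and b=x and f="\<lambda>t::real. exp (- t\<^sup>2)"] by simp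
qed

lemma erf_bound: "\<bar>erf x\<bar> \<le> 1"
proof (cases "0 \<le> x")
  case True
  define I where "I = integral {0..x} (\<lambda>t::real. exp (- t\<^sup>2))"
  have "I \<le> sqrt pi / 2" using gauss_le True unfolding I_def by blast
  moreover have "0 \<le> I" unfolding I_def by (rule gauss_nonneg)
  moreover have "erf x = 2 / sqrt pi * I" using True by (simp add: erf_def I_def)
  moreover have "0 < sqrt pi" by simp
  ultimately have "2 / sqrt pi * I \<le> 2 / sqrt pi * (sqrt pi / 2)" "0 \<le> 2 / sqrt pi * I"
    by (auto intro!: mult_left_mono)
  then show ?thesis using \<open>erf x = 2 / sqrt pi * I\<close> \<open>0 \<le> I\<close> by simp
next
  case False
  define I where "I = integral {x..0} (\<lambda>t::real. exp (- t\<^sup>2))"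
  have "I = integral {0..-x} (\<lambda>t::real. exp (- t\<^sup>2))"
    using gauss_sym[of "-x"] by (simp add: I_def)
  moreover have "integral {0..-x} (\<lambda>t::real. exp (- t\<^sup>2)) \<le> sqrt pi / 2" using gauss_le False by simp
  moreover have "0 \<le> I" unfolding I_def by (rule gauss_nonneg)
  moreover have "erf x = - (2 / sqrt pi * I)" using False by (simp add: erf_def I_def)
  moreover have "0 < sqrt pi" by simp
  ultimately have "2 / sqrt pi * I \<le> 2 / sqrt pi * (sqrt pi / 2)" "0 \<le> 2 / sqrt pi * I"
    by (auto intro!: mult_left_mono)
  then show ?thesis using \<open>erf x = - (2 / sqrt pi * I)\<close> \<open>0 \<le> I\<close> by simp
qed

lemma erfd_bound: "\<bar>erfd x\<bar> \<le> 2 / sqrt pi"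
proof -
  have "exp (- x\<^sup>2) \<le> 1" by simp
  then have "2 / sqrt pi * exp (- x\<^sup>2) \<le> 2 / sqrt pi * 1" by (intro mult_left_mono) auto
  then show ?thesis by (simp add: erfd_def abs_mult)
qed

lemma sqrt_pi_le2: "sqrt pi \<le> 2"
proof -
  have "sqrt pi \<le> sqrt 4" by (rule real_sqrt_le_mono) (use pi_less_4 in linarith)
  moreover have "sqrt 4 = (2::real)" by (rule real_sqrt_unique) auto
  ultimately show ?thesis by simp
qed

lemma erfdd_bound: "\<bar>erfdd x\<bar> \<le> (2 / sqrt pi)\<^sup>2"
proof -
  have e: "1 + x\<^sup>2 \<le> exp (x\<^sup>2)" by (rule exp_ge_add_one_self)
  have "0 \<le> (\<bar>x\<bar> - 1)\<^sup>2" by simp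
  then have "2 * \<bar>x\<bar> \<le> 1 + x\<^sup>2"
    by (simp add: power2_diff power2_abs)
  then have "2 * \<bar>x\<bar> \<le> exp (x\<^sup>2)" using e by linarith
  then have a: "2 * \<bar>x\<bar> * exp (- x\<^sup>2) \<le> 1"
    by (simp add: exp_minus field_simps)
  have sp: "sqrt pi \<le> 2" by (rule sqrt_pi_le2)
  have sp0: "0 < sqrt pi" by simp
  have "\<bar>erfdd x\<bar> = 2 / sqrt pi * (2 * \<bar>x\<bar> * exp (- x\<^sup>2))"
    by (simp add: erfdd_def abs_mult)
  also have "\<dots> \<le> 2 / sqrt pi * 1" using a by (intro mult_left_mono) auto
  also have "\<dots> \<le> 2 / sqrt pi * (2 / sqrt pi)"
  proof (rule mult_left_mono)
    show "1 \<le> 2 / sqrt pi" using sp sp0 by (simp add: field_simps)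
  qed simp
  also have "\<dots> = (2 / sqrt pi)\<^sup>2" by (simp add: power2_eq_square)
  finally show ?thesis .
qed




definition cubeI :: "'i set \<Rightarrow> ('i \<Rightarrow> real) set" where
  "cubeI I = PiE I (\<lambda>_. {-1, 1})"

definition ml :: "('i \<Rightarrow> real) \<Rightarrow> ('i \<Rightarrow> real) \<Rightarrow> 'i \<Rightarrow> real" where
  "ml v y r = (1 + v r * y r) / 2"

lemma finite_cubeI: "finite I \<Longrightarrow> finite (cubeI I)"
  unfolding cubeI_def by (intro finite_PiE) auto

lemma cubeI_abs: "v \<in> cubeI I \<Longrightarrow> r \<in> I \<Longrightarrow> \<bar>v r\<bar> = 1"
  unfolding cubeI_def by (auto simp: PiE_iff)

lemma sum_cube_prod:
  assumes I: "finite I" and J: "J \<subseteq> I" and y: "\<forall>r\<in>J. \<bar>y r\<bar> \<le> 1"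
  shows "(\<Sum>v\<in>cubeI I. \<Prod>r\<in>J. \<bar>ml v y r\<bar>) = 2 ^ card (I - J)"
proof -
  define h where "h = (\<lambda>r (s::real). if r \<in> J then \<bar>(1 + s * y r) / 2\<bar> else 1)"
  have "(\<Prod>r\<in>J. \<bar>ml v y r\<bar>) = (\<Prod>r\<in>I. h r (v r))" for v
  proof -
    have "(\<Prod>r\<in>I. h r (v r)) = (\<Prod>r\<in>I \<inter> J. \<bar>ml v y r\<bar>) * (\<Prod>r\<in>I - J. 1)"
      unfolding h_def using I by (subst prod.If_cases) (auto simp: ml_def)
    also have "I \<inter> J = J" using J by blast
    finally show ?thesis by simp
  qed
  then have "(\<Sum>v\<in>cubeI I. \<Prod>r\<in>J. \<bar>ml v y r\<bar>) = (\<Sum>v\<in>cubeI I. \<Prod>r\<in>I. h r (v r))"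
    by simp
  also have "\<dots> = (\<Prod>r\<in>I. \<Sum>s\<in>{-1,1}. h r s)"
    unfolding cubeI_def by (rule prod_sum_PiE[symmetric]) (use I in auto)
  also have "\<dots> = (\<Prod>r\<in>I. if r \<in> J then 1 else 2)"
  proof (rule prod.cong)
    fix r assume "r \<in> I"
    show "(\<Sum>s\<in>{-1,1}. h r s) = (if r \<in> J then 1 else 2)"
    proof (cases "r \<in> J")
      case True
      then have "\<bar>y r\<bar> \<le> 1" using y by auto
      then have "h r (-1) = (1 - y r) / 2" "h r 1 = (1 + y r) / 2" using True by (auto simp: h_def)
      then show ?thesis using True by simp
    qed (simp add: h_def)
  qed simp
  also have "\<dots> = (\<Prod>r\<in>I \<inter> J. 1) * (\<Prod>r\<in>I - J. 2)"
    using I by (subst prod.If_cases) (auto simp: Diff_eq)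
  also have "\<dots> = 2 ^ card (I - J)" by (simp add: Diff_eq)
  finally show ?thesis .
qed

definition E1f :: "'i set \<Rightarrow> (('i \<Rightarrow> real) \<Rightarrow> real) \<Rightarrow> ('i \<Rightarrow> real) \<Rightarrow> ('i \<Rightarrow> real) \<Rightarrow> real" where
  "E1f I g y z = (\<Sum>v\<in>cubeI I. g v * (\<Sum>r\<in>I. v r * z r / 2 * (\<Prod>r'\<in>I - {r}. ml v y r')))"

definition E2f :: "'i set \<Rightarrow> (('i \<Rightarrow> real) \<Rightarrow> real) \<Rightarrow> ('i \<Rightarrow> real) \<Rightarrow> ('i \<Rightarrow> real)
    \<Rightarrow> ('i \<Rightarrow> real) \<Rightarrow> ('i \<Rightarrow> real) \<Rightarrow> real" where
  "E2f I g y z zp yp = (\<Sum>v\<in>cubeI I. g v * (\<Sum>r\<in>I.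
      v r * zp r / 2 * (\<Prod>r'\<in>I - {r}. ml v y r')
    + v r * z r / 2 * (\<Sum>r'\<in>I - {r}. v r' * yp r' / 2 * (\<Prod>r''\<in>I - {r} - {r'}. ml v y r''))))"

lemma E1f_bound:
  assumes I: "finite I" and g: "\<forall>v\<in>cubeI I. \<bar>g v\<bar> \<le> 1" and y: "\<forall>r\<in>I. \<bar>y r\<bar> \<le> 1"
  shows "\<bar>E1f I g y z\<bar> \<le> (\<Sum>r\<in>I. \<bar>z r\<bar>)"
proof -
  have "\<bar>E1f I g y z\<bar> \<le> (\<Sum>v\<in>cubeI I. \<bar>g v * (\<Sum>r\<in>I. v r * z r / 2 * (\<Prod>r'\<in>I - {r}. ml v y r'))\<bar>)"
    unfolding E1f_def by (rule sum_abs)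
  also have "\<dots> \<le> (\<Sum>v\<in>cubeI I. \<Sum>r\<in>I. \<bar>z r\<bar> / 2 * (\<Prod>r'\<in>I - {r}. \<bar>ml v y r'\<bar>))"
  proof (rule sum_mono)
    fix v assume v: "v \<in> cubeI I"
    have "\<bar>g v * (\<Sum>r\<in>I. v r * z r / 2 * (\<Prod>r'\<in>I - {r}. ml v y r'))\<bar>
        \<le> 1 * \<bar>\<Sum>r\<in>I. v r * z r / 2 * (\<Prod>r'\<in>I - {r}. ml v y r')\<bar>"
      unfolding abs_mult using g v by (intro mult_right_mono) auto
    also have "\<dots> \<le> (\<Sum>r\<in>I. \<bar>v r * z r / 2 * (\<Prod>r'\<in>I - {r}. ml v y r')\<bar>)"
      unfolding mult.left_neutral by (rule sum_abs)
    also have "\<dots> = (\<Sum>r\<in>I. \<bar>z r\<bar> / 2 * (\<Prod>r'\<in>I - {r}. \<bar>ml v y r'\<bar>))"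
      by (intro sum.cong refl) (simp add: abs_mult abs_prod cubeI_abs[OF v])
    finally show "\<bar>g v * (\<Sum>r\<in>I. v r * z r / 2 * (\<Prod>r'\<in>I - {r}. ml v y r'))\<bar>
        \<le> (\<Sum>r\<in>I. \<bar>z r\<bar> / 2 * (\<Prod>r'\<in>I - {r}. \<bar>ml v y r'\<bar>))" .
  qed
  also have "\<dots> = (\<Sum>r\<in>I. \<bar>z r\<bar> / 2 * (\<Sum>v\<in>cubeI I. \<Prod>r'\<in>I - {r}. \<bar>ml v y r'\<bar>))"
    by (subst sum.swap) (simp add: sum_distrib_left)
  also have "\<dots> = (\<Sum>r\<in>I. \<bar>z r\<bar>)"
  proof (rule sum.cong)
    fix r assume r: "r \<in> I"
    have "(\<Sum>v\<in>cubeI I. \<Prod>r'\<in>I - {r}. \<bar>ml v y r'\<bar>) = 2 ^ card (I - (I - {r}))"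
      using I y by (intro sum_cube_prod) auto
    also have "I - (I - {r}) = {r}" using r by blast
    finally show "\<bar>z r\<bar> / 2 * (\<Sum>v\<in>cubeI I. \<Prod>r'\<in>I - {r}. \<bar>ml v y r'\<bar>) = \<bar>z r\<bar>" by simp
  qed simp
  finally show ?thesis .
qed

lemma E2f_bound:
  assumes I: "finite I" and g: "\<forall>v\<in>cubeI I. \<bar>g v\<bar> \<le> 1" and y: "\<forall>r\<in>I. \<bar>y r\<bar> \<le> 1"
  shows "\<bar>E2f I g y z zp yp\<bar> \<le> (\<Sum>r\<in>I. \<bar>zp r\<bar> + \<bar>z r\<bar> * (\<Sum>r'\<in>I - {r}. \<bar>yp r'\<bar>))"
proof -
  define P where "P v r = v r * zp r / 2 * (\<Prod>r'\<in>I - {r}. ml v y r')" for v r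
  define Q where "Q v r = v r * z r / 2 * (\<Sum>r'\<in>I - {r}. v r' * yp r' / 2 * (\<Prod>r''\<in>I - {r} - {r'}. ml v y r''))" for v r
  have split: "E2f I g y z zp yp = E1f I g y zp + (\<Sum>v\<in>cubeI I. g v * (\<Sum>r\<in>I. Q v r))"
    unfolding E2f_def E1f_def Q_def by (simp add: sum.distrib distrib_left)
  have b1: "\<bar>E1f I g y zp\<bar> \<le> (\<Sum>r\<in>I. \<bar>zp r\<bar>)" by (rule E1f_bound[OF I g y])
  have "\<bar>\<Sum>v\<in>cubeI I. g v * (\<Sum>r\<in>I. Q v r)\<bar> \<le> (\<Sum>v\<in>cubeI I. \<bar>g v * (\<Sum>r\<in>I. Q v r)\<bar>)"
    by (rule sum_abs)
  also have "\<dots> \<le> (\<Sum>v\<in>cubeI I. \<Sum>r\<in>I. \<Sum>r'\<in>I - {r}. \<bar>z r\<bar> * \<bar>yp r'\<bar> / 4 * (\<Prod>r''\<in>I - {r} - {r'}. \<bar>ml v y r''\<bar>))"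
  proof (rule sum_mono)
    fix v assume v: "v \<in> cubeI I"
    have "\<bar>g v * (\<Sum>r\<in>I. Q v r)\<bar> \<le> 1 * \<bar>\<Sum>r\<in>I. Q v r\<bar>"
      unfolding abs_mult using g v by (intro mult_right_mono) auto
    also have "\<dots> \<le> (\<Sum>r\<in>I. \<bar>Q v r\<bar>)" unfolding mult.left_neutral by (rule sum_abs)
    also have "\<dots> \<le> (\<Sum>r\<in>I. \<Sum>r'\<in>I - {r}. \<bar>z r\<bar> * \<bar>yp r'\<bar> / 4 * (\<Prod>r''\<in>I - {r} - {r'}. \<bar>ml v y r''\<bar>))"
    proof (rule sum_mono)
      fix r assume r: "r \<in> I"
      have "\<bar>Q v r\<bar> = \<bar>z r\<bar> / 2 * \<bar>\<Sum>r'\<in>I - {r}. v r' * yp r' / 2 * (\<Prod>r''\<in>I - {r} - {r'}. ml v y r'')\<bar>"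
        unfolding Q_def by (simp add: abs_mult cubeI_abs[OF v r])
      also have "\<dots> \<le> \<bar>z r\<bar> / 2 * (\<Sum>r'\<in>I - {r}. \<bar>v r' * yp r' / 2 * (\<Prod>r''\<in>I - {r} - {r'}. ml v y r'')\<bar>)"
        by (intro mult_left_mono sum_abs) auto
      also have "\<dots> = (\<Sum>r'\<in>I - {r}. \<bar>z r\<bar> * \<bar>yp r'\<bar> / 4 * (\<Prod>r''\<in>I - {r} - {r'}. \<bar>ml v y r''\<bar>))"
        by (simp add: sum_distrib_left abs_mult abs_prod cubeI_abs[OF v] mult_ac)
      finally show "\<bar>Q v r\<bar> \<le> \<dots>" .
    qed
    finally show "\<bar>g v * (\<Sum>r\<in>I. Q v r)\<bar> \<le> \<dots>" .
  qed
  also have "\<dots> = (\<Sum>r\<in>I. \<Sum>r'\<in>I - {r}. \<bar>z r\<bar> * \<bar>yp r'\<bar> / 4 * (\<Sum>v\<in>cubeI I. \<Prod>r''\<in>I - {r} - {r'}. \<bar>ml v y r''\<bar>))"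
    by (subst sum.swap) (simp add: sum.swap[where B="I - _"] sum_distrib_left)
  also have "\<dots> = (\<Sum>r\<in>I. \<Sum>r'\<in>I - {r}. \<bar>z r\<bar> * \<bar>yp r'\<bar>)"
  proof (intro sum.cong refl)
    fix r r' assume r: "r \<in> I" and r': "r' \<in> I - {r}"
    have "(\<Sum>v\<in>cubeI I. \<Prod>r''\<in>I - {r} - {r'}. \<bar>ml v y r''\<bar>) = 2 ^ card (I - (I - {r} - {r'}))"
      using I y by (intro sum_cube_prod) auto
    also have "I - (I - {r} - {r'}) = {r, r'}" using r r' by blast
    also have "card {r, r'} = 2" using r' by auto
    finally show "\<bar>z r\<bar> * \<bar>yp r'\<bar> / 4 * (\<Sum>v\<in>cubeI I. \<Prod>r''\<in>I - {r} - {r'}. \<bar>ml v y r''\<bar>) = \<bar>z r\<bar> * \<bar>yp r'\<bar>"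
      by simp
  qed
  finally have b2: "\<bar>\<Sum>v\<in>cubeI I. g v * (\<Sum>r\<in>I. Q v r)\<bar> \<le> (\<Sum>r\<in>I. \<Sum>r'\<in>I - {r}. \<bar>z r\<bar> * \<bar>yp r'\<bar>)" .
  have "\<bar>E2f I g y z zp yp\<bar> \<le> (\<Sum>r\<in>I. \<bar>zp r\<bar>) + (\<Sum>r\<in>I. \<Sum>r'\<in>I - {r}. \<bar>z r\<bar> * \<bar>yp r'\<bar>)"
    unfolding split using b1 b2 by linarith
  also have "\<dots> = (\<Sum>r\<in>I. \<bar>zp r\<bar> + \<bar>z r\<bar> * (\<Sum>r'\<in>I - {r}. \<bar>yp r'\<bar>))"
    by (simp add: sum.distrib sum_distrib_left)
  finally show ?thesis .
qed

lemma sum_prod_ZY: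
  fixes z zp yp Z Y :: "'i \<Rightarrow> real"
  assumes I: "finite I" and Z: "\<forall>r\<in>I. \<bar>z r\<bar> \<le> Z r" and Y: "\<forall>r\<in>I. \<bar>yp r\<bar> \<le> Y r"
    and ZP: "\<forall>r\<in>I. \<bar>zp r\<bar> \<le> Z r * Y r"
  shows "(\<Sum>r\<in>I. \<bar>zp r\<bar> + \<bar>z r\<bar> * (\<Sum>r'\<in>I - {r}. \<bar>yp r'\<bar>)) \<le> sum Z I * sum Y I"
proof -
  have "(\<Sum>r\<in>I. \<bar>zp r\<bar> + \<bar>z r\<bar> * (\<Sum>r'\<in>I - {r}. \<bar>yp r'\<bar>)) \<le> (\<Sum>r\<in>I. Z r * Y r + Z r * (\<Sum>r'\<in>I - {r}. Y r'))"
  proof (rule sum_mono)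
    fix r assume r: "r \<in> I"
    have "(\<Sum>r'\<in>I - {r}. \<bar>yp r'\<bar>) \<le> (\<Sum>r'\<in>I - {r}. Y r')" using Y by (intro sum_mono) auto
    moreover have "0 \<le> (\<Sum>r'\<in>I - {r}. \<bar>yp r'\<bar>)" by (simp add: sum_nonneg)
    ultimately have "\<bar>z r\<bar> * (\<Sum>r'\<in>I - {r}. \<bar>yp r'\<bar>) \<le> Z r * (\<Sum>r'\<in>I - {r}. Y r')"
      using Z r by (intro mult_mono) auto
    then show "\<bar>zp r\<bar> + \<bar>z r\<bar> * (\<Sum>r'\<in>I - {r}. \<bar>yp r'\<bar>) \<le> Z r * Y r + Z r * (\<Sum>r'\<in>I - {r}. Y r')"
      using ZP r by auto
  qed
  also have "\<dots> = (\<Sum>r\<in>I. Z r * sum Y I)"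
  proof (rule sum.cong)
    fix r assume r: "r \<in> I"
    have "sum Y I = Y r + sum Y (I - {r})" using I r by (simp add: sum.remove)
    then show "Z r * Y r + Z r * (\<Sum>r'\<in>I - {r}. Y r') = Z r * sum Y I" by (simp add: algebra_simps)
  qed simp
  also have "\<dots> = sum Z I * sum Y I" by (simp add: sum_distrib_right)
  finally show ?thesis .
qed

lemma DERIV_prod':
  assumes "\<And>i. i \<in> I \<Longrightarrow> (f i has_real_derivative f' i) (at x)"
  shows "((\<lambda>x. \<Prod>i\<in>I. f i x) has_real_derivative (\<Sum>i\<in>I. f' i * (\<Prod>j\<in>I - {i}. f j x))) (at x)"
  using assms unfolding has_field_derivative_def
  by (rule has_derivative_eq_rhs[OF has_derivative_prod]) (auto simp: sum_distrib_left mult_ac)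

lemma E0_deriv:
  assumes I: "finite I" and d: "\<And>r. r \<in> I \<Longrightarrow> ((\<lambda>t. y r t) has_real_derivative yp r t) (at t)"
  shows "((\<lambda>t. \<Sum>v\<in>cubeI I. g v * (\<Prod>r\<in>I. ml v (\<lambda>r. y r t) r)) has_real_derivative
     E1f I g (\<lambda>r. y r t) (\<lambda>r. yp r t)) (at t)"
proof -
  have "((\<lambda>t. \<Sum>v\<in>cubeI I. g v * (\<Prod>r\<in>I. ml v (\<lambda>r. y r t) r)) has_real_derivative
     (\<Sum>v\<in>cubeI I. g v * (\<Sum>r\<in>I. v r * yp r t / 2 * (\<Prod>r'\<in>I - {r}. ml v (\<lambda>r. y r t) r')))) (at t)"
    unfolding ml_def
    by (intro DERIV_sum DERIV_cmult DERIV_prod') (auto intro!: derivative_eq_intros d)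
  then show ?thesis unfolding E1f_def .
qed

lemma E1_deriv:
  assumes I: "finite I" and d: "\<And>r. r \<in> I \<Longrightarrow> ((\<lambda>t. y r t) has_real_derivative yp r t) (at t)"
    and dz: "\<And>r. r \<in> I \<Longrightarrow> ((\<lambda>t. z r t) has_real_derivative zp r t) (at t)"
  shows "((\<lambda>t. E1f I g (\<lambda>r. y r t) (\<lambda>r. z r t)) has_real_derivative
     E2f I g (\<lambda>r. y r t) (\<lambda>r. z r t) (\<lambda>r. zp r t) (\<lambda>r. yp r t)) (at t)"
proof -
  have inner: "((\<lambda>t. v r * z r t / 2 * (\<Prod>r'\<in>I - {r}. ml v (\<lambda>r. y r t) r')) has_real_derivative
     v r * zp r t / 2 * (\<Prod>r'\<in>I - {r}. ml v (\<lambda>r. y r t) r')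
       + v r * z r t / 2 * (\<Sum>r'\<in>I - {r}. v r' * yp r' t / 2 * (\<Prod>r''\<in>I - {r} - {r'}. ml v (\<lambda>r. y r t) r''))) (at t)"
    if r: "r \<in> I" for v r
  proof -
    have dm: "((\<lambda>t. ml v (\<lambda>r. y r t) r') has_real_derivative v r' * yp r' t / 2) (at t)" if "r' \<in> I" for r'
      unfolding ml_def using that by (auto intro!: derivative_eq_intros d)
    have dp: "((\<lambda>t. \<Prod>r'\<in>I - {r}. ml v (\<lambda>r. y r t) r') has_real_derivative
        (\<Sum>r'\<in>I - {r}. v r' * yp r' t / 2 * (\<Prod>r''\<in>I - {r} - {r'}. ml v (\<lambda>r. y r t) r''))) (at t)"
      by (rule DERIV_prod') (auto intro: dm)
    have dzz: "((\<lambda>t. v r * z r t / 2) has_real_derivative v r * zp r t / 2) (at t)"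
      using r by (auto intro!: derivative_eq_intros dz)
    show ?thesis by (rule DERIV_cong[OF DERIV_mult'[OF dzz dp]]) (simp add: algebra_simps)
  qed
  show ?thesis unfolding E1f_def E2f_def
    by (intro DERIV_sum DERIV_cmult inner)
qed

lemma flip_cubeI: "v \<in> cubeI I \<Longrightarrow> r0 \<in> I \<Longrightarrow> v(r0 := - v r0) \<in> cubeI I"
  unfolding cubeI_def
  using PiE_fun_upd[of "- v r0" "\<lambda>_. {-1, 1::real}" r0 v I] by (auto simp: PiE_iff insert_absorb)

lemma zero_one:
  assumes I: "finite I" and r0: "r0 \<in> I" and g: "\<forall>v\<in>cubeI I. g (v(r0 := - v r0)) = g v"
  shows "(\<Sum>v\<in>cubeI I. g v * (\<Prod>r\<in>I. ml v y r)) = (\<Sum>v\<in>cubeI I. g v * (\<Prod>r\<in>I. ml v (y(r0 := 0)) r))"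
proof -
  define R where "R v = (\<Prod>r\<in>I - {r0}. ml v y r)" for v
  define fl where "fl v = v(r0 := - v r0)" for v :: "'a \<Rightarrow> real"
  have Rfl: "R (fl v) = R v" for v
    unfolding R_def fl_def by (intro prod.cong refl) (auto simp: ml_def)
  have split: "(\<Prod>r\<in>I. ml v y r) = ml v y r0 * R v" for v
    unfolding R_def using I r0 by (simp add: prod.remove)
  have split0: "(\<Prod>r\<in>I. ml v (y(r0 := 0)) r) = R v / 2" for v
  proof -
    have "(\<Prod>r\<in>I. ml v (y(r0 := 0)) r) = ml v (y(r0 := 0)) r0 * (\<Prod>r\<in>I - {r0}. ml v (y(r0 := 0)) r)"
      using I r0 by (simp add: prod.remove)
    also have "(\<Prod>r\<in>I - {r0}. ml v (y(r0 := 0)) r) = R v"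
      unfolding R_def by (intro prod.cong refl) (auto simp: ml_def)
    finally show ?thesis by (simp add: ml_def)
  qed
  define L where "L = (\<Sum>v\<in>cubeI I. g v * (ml v y r0 * R v))"
  have "L = (\<Sum>v\<in>cubeI I. g (fl v) * (ml (fl v) y r0 * R (fl v)))"
    unfolding L_def
    by (rule sum.reindex_bij_witness[where i=fl and j=fl])
       (auto simp: fl_def flip_cubeI r0)
  also have "\<dots> = (\<Sum>v\<in>cubeI I. g v * ((1 - v r0 * y r0) / 2 * R v))"
  proof (intro sum.cong refl)
    fix v assume v: "v \<in> cubeI I"
    have "g (fl v) = g v" using g v unfolding fl_def by blast
    moreover have "ml (fl v) y r0 = (1 - v r0 * y r0) / 2" by (simp add: fl_def ml_def)
    ultimately show "g (fl v) * (ml (fl v) y r0 * R (fl v)) = g v * ((1 - v r0 * y r0) / 2 * R v)"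
      by (simp add: Rfl)
  qed
  finally have L2: "L = (\<Sum>v\<in>cubeI I. g v * ((1 - v r0 * y r0) / 2 * R v))" .
  have "2 * L = L + L" by simp
  also have "\<dots> = (\<Sum>v\<in>cubeI I. g v * (ml v y r0 * R v) + g v * ((1 - v r0 * y r0) / 2 * R v))"
    by (subst (2) L2) (simp add: L_def sum.distrib)
  also have "\<dots> = (\<Sum>v\<in>cubeI I. 2 * (g v * (R v / 2)))"
    by (intro sum.cong refl) (simp add: ml_def algebra_simps add_divide_distrib[symmetric])
  finally have "2 * L = 2 * (\<Sum>v\<in>cubeI I. g v * (R v / 2))" by (simp add: sum_distrib_left)
  then have "L = (\<Sum>v\<in>cubeI I. g v * (R v / 2))" by simp
  then show ?thesis unfolding L_def split split0 .
qed

lemma zero_set: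
  assumes I: "finite I" and K: "K \<subseteq> I" and g: "\<forall>r0\<in>K. \<forall>v\<in>cubeI I. g (v(r0 := - v r0)) = g v"
  shows "(\<Sum>v\<in>cubeI I. g v * (\<Prod>r\<in>I. ml v y r)) =
         (\<Sum>v\<in>cubeI I. g v * (\<Prod>r\<in>I. ml v (\<lambda>r. if r \<in> K then 0 else y r) r))"
proof -
  have "finite K" using K I finite_subset by blast
  then show ?thesis using K g
  proof (induction K rule: finite_induct)
    case empty
    then show ?case by simp
  next
    case (insert r0 K)
    have eq: "(\<lambda>r. if r \<in> insert r0 K then 0 else y r) = (\<lambda>r. if r \<in> K then 0 else y r)(r0 := 0)"
      by auto
    have ih: "(\<Sum>v\<in>cubeI I. g v * (\<Prod>r\<in>I. ml v y r)) =
         (\<Sum>v\<in>cubeI I. g v * (\<Prod>r\<in>I. ml v (\<lambda>r. if r \<in> K then 0 else y r) r))"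
      using insert.IH insert.prems by auto
    have "(\<Sum>v\<in>cubeI I. g v * (\<Prod>r\<in>I. ml v (\<lambda>r. if r \<in> K then 0 else y r) r)) =
          (\<Sum>v\<in>cubeI I. g v * (\<Prod>r\<in>I. ml v ((\<lambda>r. if r \<in> K then 0 else y r)(r0 := 0)) r))"
      by (rule zero_one[OF I]) (use insert.prems in \<open>auto simp del: fun_upd_apply\<close>)
    then show ?case unfolding eq ih .
  qed
qed




definition sg :: "cmp \<Rightarrow> real" where
  "sg r = (case r of Le \<Rightarrow> 1 | Lt \<Rightarrow> 1 | Ge \<Rightarrow> -1 | Gt \<Rightarrow> -1 | Eq \<Rightarrow> 0 | Neq \<Rightarrow> 0)"
definition cst :: "cmp \<Rightarrow> real" where
  "cst r = (case r of Le \<Rightarrow> 0 | Lt \<Rightarrow> 0 | Ge \<Rightarrow> 0 | Gt \<Rightarrow> 0 | Eq \<Rightarrow> 1 | Neq \<Rightarrow> -1)"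

lemma atom_mean_alt:
  "atom_mean \<sigma> r q q0 b = sg r * erf ((q \<bullet> b - q0) / (sqrt 2 * norm q * \<sigma>)) + cst r"
  by (cases r) (simp_all add: atom_mean_def sg_def cst_def Let_def)

lemma sg_abs: "\<bar>sg r\<bar> \<le> 1"
  by (cases r) (simp_all add: sg_def)

lemma atom_mean_bound: "\<bar>atom_mean \<sigma> r q q0 b\<bar> \<le> 1"
  using erf_bound[of "(q \<bullet> b - q0) / (sqrt 2 * norm q * \<sigma>)"]
  by (cases r) (simp_all add: atom_mean_def Let_def)

lemma pow_expand: "finite A \<Longrightarrow> (\<Sum>S\<in>Pow A. \<Prod>i\<in>S. u i) = (\<Prod>i\<in>A. 1 + (u i :: real))"
  using prod_add[of A u "\<lambda>_. 1"] by (simp add: add.commute)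

lemma sum4_swap:
  "(\<Sum>a\<in>A. \<Sum>b\<in>B. \<Sum>c\<in>C. \<Sum>d\<in>D. G a b c d) = (\<Sum>c\<in>C. \<Sum>d\<in>D. \<Sum>a\<in>A. \<Sum>b\<in>B. (G a b c d :: real))"
proof -
  have "(\<Sum>a\<in>A. \<Sum>b\<in>B. \<Sum>c\<in>C. \<Sum>d\<in>D. G a b c d) = (\<Sum>a\<in>A. \<Sum>c\<in>C. \<Sum>b\<in>B. \<Sum>d\<in>D. G a b c d)"
    by (rule sum.cong[OF refl], rule sum.swap)
  also have "\<dots> = (\<Sum>a\<in>A. \<Sum>c\<in>C. \<Sum>d\<in>D. \<Sum>b\<in>B. G a b c d)"
    by (rule sum.cong[OF refl], rule sum.cong[OF refl], rule sum.swap)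
  also have "\<dots> = (\<Sum>c\<in>C. \<Sum>a\<in>A. \<Sum>d\<in>D. \<Sum>b\<in>B. G a b c d)"
    by (rule sum.swap)
  also have "\<dots> = (\<Sum>c\<in>C. \<Sum>d\<in>D. \<Sum>a\<in>A. \<Sum>b\<in>B. G a b c d)"
    by (rule sum.cong[OF refl], rule sum.swap)
  finally show ?thesis .
qed

lemma fourier_expand:
  fixes F :: "('n::finite \<Rightarrow> real) \<Rightarrow> (nat \<Rightarrow> real) \<Rightarrow> real" and a :: "real ^ 'n" and D :: "nat \<Rightarrow> real"
  shows "(\<Sum>S\<in>Pow (UNIV :: 'n set). \<Sum>T\<in>Pow {..<k}. fourier_coeff k F S T * (\<Prod>i\<in>S. a $ i) * (\<Prod>i\<in>T. D i))
    = (\<Sum>x\<in>cubeN. \<Sum>z\<in>cubeK k. F x z * (\<Prod>j\<in>UNIV. (1 + x j * a $ j) / 2) * (\<Prod>i\<in>{..<k}. (1 + z i * D i) / 2))"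
proof -
  define K :: real where "K = 2 ^ (CARD('n) + k)"
  have "(\<Sum>S\<in>Pow (UNIV :: 'n set). \<Sum>T\<in>Pow {..<k}. fourier_coeff k F S T * (\<Prod>i\<in>S. a $ i) * (\<Prod>i\<in>T. D i))
     = (\<Sum>S\<in>Pow (UNIV :: 'n set). \<Sum>T\<in>Pow {..<k}. \<Sum>x\<in>cubeN. \<Sum>z\<in>cubeK k.
          F x z * (\<Prod>i\<in>S. x i * a $ i) * (\<Prod>i\<in>T. z i * D i) / K)"
    unfolding fourier_coeff_def K_def
    by (intro sum.cong refl) (simp add: sum_divide_distrib sum_distrib_right sum_distrib_left prod.distrib mult_ac)
  also have "\<dots> = (\<Sum>x\<in>cubeN. \<Sum>z\<in>cubeK k. \<Sum>S\<in>Pow (UNIV :: 'n set). \<Sum>T\<in>Pow {..<k}.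
          F x z * (\<Prod>i\<in>S. x i * a $ i) * (\<Prod>i\<in>T. z i * D i) / K)"
    by (rule sum4_swap)
  also have "\<dots> = (\<Sum>x\<in>cubeN. \<Sum>z\<in>cubeK k. F x z * (\<Sum>S\<in>Pow (UNIV :: 'n set). \<Prod>i\<in>S. x i * a $ i)
          * (\<Sum>T\<in>Pow {..<k}. \<Prod>i\<in>T. z i * D i) / K)"
    by (simp add: sum_divide_distrib sum_distrib_right sum_distrib_left mult_ac)
  also have "\<dots> = (\<Sum>x\<in>cubeN. \<Sum>z\<in>cubeK k. F x z * (\<Prod>j\<in>UNIV. 1 + x j * a $ j)
          * (\<Prod>i\<in>{..<k}. 1 + z i * D i) / K)"
  proof -
    have pe: "(\<Sum>S\<in>UNIV. \<Prod>i\<in>S. u i) = (\<Prod>i\<in>UNIV. 1 + u i)" for u :: "'n \<Rightarrow> real"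
      using pow_expand[of "UNIV::'n set" u] by simp
    show ?thesis by (simp add: pe pow_expand)
  qed
  also have "\<dots> = (\<Sum>x\<in>cubeN. \<Sum>z\<in>cubeK k. F x z * (\<Prod>j\<in>UNIV. (1 + x j * a $ j) / 2) * (\<Prod>i\<in>{..<k}. (1 + z i * D i) / 2))"
    by (simp add: K_def prod_dividef power_add)
  finally show ?thesis .
qed


definition Is :: "nat \<Rightarrow> ('n + nat) set" where "Is k = range Inl \<union> Inr ` {..<k}"

lemma finite_Is: "finite (Is k :: ('n::finite + nat) set)"
  unfolding Is_def by auto

lemma prod_Is: "(\<Prod>r\<in>(Is k :: ('n::finite + nat) set). F r) = (\<Prod>j\<in>UNIV. F (Inl j)) * (\<Prod>i\<in>{..<k}. F (Inr i) :: real)"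
proof -
  have "(\<Prod>r\<in>(Is k :: ('n + nat) set). F r) = prod F (range Inl) * prod F (Inr ` {..<k})"
    unfolding Is_def by (rule prod.union_disjoint) auto
  also have "prod F (range Inl) = (\<Prod>j\<in>UNIV. F (Inl j))" by (simp add: prod.reindex)
  also have "prod F (Inr ` {..<k}) = (\<Prod>i\<in>{..<k}. F (Inr i))" by (simp add: prod.reindex)
  finally show ?thesis .
qed

lemma sum_Is: "(\<Sum>r\<in>(Is k :: ('n::finite + nat) set). F r) = (\<Sum>j\<in>UNIV. F (Inl j)) + (\<Sum>i\<in>{..<k}. F (Inr i) :: real)"
proof -
  have "(\<Sum>r\<in>(Is k :: ('n + nat) set). F r) = sum F (range Inl) + sum F (Inr ` {..<k})"
    unfolding Is_def by (rule sum.union_disjoint) auto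
  also have "sum F (range Inl) = (\<Sum>j\<in>UNIV. F (Inl j))" by (simp add: sum.reindex)
  also have "sum F (Inr ` {..<k}) = (\<Sum>i\<in>{..<k}. F (Inr i))" by (simp add: sum.reindex)
  finally show ?thesis .
qed

lemma cubeI_split:
  assumes "v \<in> cubeI (Is k :: ('n::finite + nat) set)"
  shows "v \<circ> Inl \<in> cubeN" "v \<circ> Inr \<in> cubeK k"
  using assms unfolding cubeI_def cubeN_def cubeK_def Is_def
  by (auto simp: PiE_iff extensional_def)

lemma cubeI_join:
  assumes "x \<in> cubeN" "z \<in> cubeK k"
  shows "case_sum x z \<in> cubeI (Is k :: ('n::finite + nat) set)"
  using assms unfolding cubeI_def cubeN_def cubeK_def Is_def
  by (auto simp: PiE_iff extensional_def split: sum.splits)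

lemma case_sum_comp [simp]: "case_sum x z \<circ> Inl = x" "case_sum x z \<circ> Inr = z"
  by (auto simp: fun_eq_iff)

lemma sum_cube_join:
  "(\<Sum>x\<in>(cubeN :: ('n::finite \<Rightarrow> real) set). \<Sum>z\<in>cubeK k. F x z) = (\<Sum>v\<in>cubeI (Is k). F (v \<circ> Inl) (v \<circ> Inr) :: real)"
proof -
  have "(\<Sum>x\<in>(cubeN :: ('n \<Rightarrow> real) set). \<Sum>z\<in>cubeK k. F x z) = (\<Sum>(x, z)\<in>cubeN \<times> cubeK k. F x z)"
    by (rule sum.cartesian_product)
  also have "\<dots> = (\<Sum>v\<in>cubeI (Is k). F (v \<circ> Inl) (v \<circ> Inr))"
  proof (rule sum.reindex_bij_witness[where j="\<lambda>(x, z). case_sum x z" and i="\<lambda>v. (v \<circ> Inl, v \<circ> Inr)"])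
    fix v assume "v \<in> cubeI (Is k :: ('n + nat) set)"
    then show "(case (v \<circ> Inl, v \<circ> Inr) of (x, z) \<Rightarrow> case_sum x z) = v"
      by (auto simp: fun_eq_iff split: sum.splits)
  next
    fix v assume "v \<in> cubeI (Is k :: ('n + nat) set)"
    then show "(v \<circ> Inl, v \<circ> Inr) \<in> cubeN \<times> cubeK k" using cubeI_split by auto
  next
    fix b :: "('n \<Rightarrow> real) \<times> (nat \<Rightarrow> real)"
    assume "b \<in> cubeN \<times> cubeK k"
    show "((case b of (x, z) \<Rightarrow> case_sum x z) \<circ> Inl, (case b of (x, z) \<Rightarrow> case_sum x z) \<circ> Inr) = b"
      by (cases b) auto
  next
    fix b :: "('n \<Rightarrow> real) \<times> (nat \<Rightarrow> real)"
    assume "b \<in> cubeN \<times> cubeK k"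
    then show "(case b of (x, z) \<Rightarrow> case_sum x z) \<in> cubeI (Is k)"
      by (cases b) (auto intro: cubeI_join)
  next
    fix b :: "('n \<Rightarrow> real) \<times> (nat \<Rightarrow> real)"
    assume "b \<in> cubeN \<times> cubeK k"
    then show "F ((case b of (x, z) \<Rightarrow> case_sum x z) \<circ> Inl) ((case b of (x, z) \<Rightarrow> case_sum x z) \<circ> Inr) = (case b of (x, z) \<Rightarrow> F x z)"
      by (cases b) auto
  qed
  finally show ?thesis .
qed

locale prob =
  fixes \<sigma> :: real and k :: nat
    and rel :: "nat \<Rightarrow> cmp" and q :: "nat \<Rightarrow> real ^ 'm::finite" and q0 :: "nat \<Rightarrow> real"
    and C :: "'c set" and w :: "'c \<Rightarrow> real"
    and f :: "'c \<Rightarrow> ('n::finite \<Rightarrow> real) \<Rightarrow> (nat \<Rightarrow> real) \<Rightarrow> real"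
    and A :: "'c \<Rightarrow> nat set"
  assumes sigma_pos: "\<sigma> > 0"
    and q_nz: "\<forall>i<k. q i \<noteq> 0"
    and C_fin: "finite C"
    and w_pos: "\<forall>c\<in>C. w c > 0"
    and f_pm1: "\<forall>c\<in>C. \<forall>x\<in>cubeN. \<forall>z\<in>cubeK k. f c x z \<in> {-1, 1}"
    and A_atoms: "\<forall>c\<in>C. A c \<subseteq> {..<k}"
    and f_dep: "\<forall>c\<in>C. \<forall>x\<in>cubeN. \<forall>z\<in>cubeK k. \<forall>z'\<in>cubeK k.
                  (\<forall>i\<in>A c. z i = z' i) \<longrightarrow> f c x z = f c x z'"
begin

definition gc :: "'c \<Rightarrow> ('n + nat \<Rightarrow> real) \<Rightarrow> real" where
  "gc c v = f c (v \<circ> Inl) (v \<circ> Inr)"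

definition Kq :: "nat \<Rightarrow> real" where "Kq i = sqrt 2 * norm (q i) * \<sigma>"

definition arg :: "nat \<Rightarrow> real ^ 'm \<Rightarrow> real" where "arg i b = (q i \<bullet> b - q0 i) / Kq i"

definition Yc :: "'c \<Rightarrow> real ^ 'n \<Rightarrow> real ^ 'm \<Rightarrow> 'n + nat \<Rightarrow> real" where
  "Yc c a b r = (case r of Inl j \<Rightarrow> a $ j
      | Inr i \<Rightarrow> if i \<in> A c then atom_mean \<sigma> (rel i) (q i) (q0 i) b else 0)"

definition Phi :: "'c \<Rightarrow> real ^ 'n \<Rightarrow> real ^ 'm \<Rightarrow> real" where
  "Phi c a b = (\<Sum>v\<in>cubeI (Is k). gc c v * (\<Prod>r\<in>Is k. ml v (Yc c a b) r))"

lemma gc_bound: "c \<in> C \<Longrightarrow> v \<in> cubeI (Is k) \<Longrightarrow> \<bar>gc c v\<bar> \<le> 1"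
  using f_pm1 cubeI_split[of v k] unfolding gc_def by fastforce

lemma Phi_repr:
  assumes c: "c \<in> C"
  shows "(\<Sum>S\<in>Pow (UNIV :: 'n set). \<Sum>T\<in>Pow {..<k}. fourier_coeff k (f c) S T * (\<Prod>i\<in>S. a $ i)
      * (\<Prod>i\<in>T. atom_mean \<sigma> (rel i) (q i) (q0 i) b)) = Phi c a b"
proof -
  define D where "D i = atom_mean \<sigma> (rel i) (q i) (q0 i) b" for i
  define Yf :: "'n + nat \<Rightarrow> real" where "Yf r = (case r of Inl j \<Rightarrow> a $ j | Inr i \<Rightarrow> D i)" for r
  define K :: "('n + nat) set" where "K = Inr ` ({..<k} - A c)"
  have "(\<Sum>S\<in>Pow (UNIV :: 'n set). \<Sum>T\<in>Pow {..<k}. fourier_coeff k (f c) S T * (\<Prod>i\<in>S. a $ i)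
      * (\<Prod>i\<in>T. atom_mean \<sigma> (rel i) (q i) (q0 i) b))
    = (\<Sum>x\<in>cubeN. \<Sum>z\<in>cubeK k. f c x z * (\<Prod>j\<in>UNIV. (1 + x j * a $ j) / 2) * (\<Prod>i\<in>{..<k}. (1 + z i * D i) / 2))"
    unfolding D_def by (rule fourier_expand)
  also have "\<dots> = (\<Sum>v\<in>cubeI (Is k). gc c v * (\<Prod>r\<in>Is k. ml v Yf r))"
    by (subst sum_cube_join) (simp add: prod_Is gc_def ml_def Yf_def mult.assoc)
  also have "\<dots> = (\<Sum>v\<in>cubeI (Is k). gc c v * (\<Prod>r\<in>Is k. ml v (\<lambda>r. if r \<in> K then 0 else Yf r) r))"
  proof (rule zero_set[OF finite_Is])
    show "K \<subseteq> Is k" unfolding K_def Is_def by auto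
  next
    show "\<forall>r0\<in>K. \<forall>v\<in>cubeI (Is k). gc c (v(r0 := - v r0)) = gc c v"
    proof (intro ballI)
      fix r0 and v :: "'n + nat \<Rightarrow> real" assume r0: "r0 \<in> K" and v: "v \<in> cubeI (Is k)"
      obtain i where i: "r0 = Inr i" "i < k" "i \<notin> A c" using r0 unfolding K_def by auto
      have v': "v(r0 := - v r0) \<in> cubeI (Is k)" using flip_cubeI[OF v] r0 unfolding K_def Is_def by auto
      have l: "v(r0 := - v r0) \<circ> Inl = v \<circ> Inl" using i by (auto simp: fun_eq_iff)
      have fd: "\<forall>x\<in>cubeN. \<forall>z\<in>cubeK k. \<forall>z'\<in>cubeK k. (\<forall>i\<in>A c. z i = z' i) \<longrightarrow> f c x z = f c x z'"
        using f_dep c by blast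
      have agree: "(v \<circ> Inr) j = (v(r0 := - v r0) \<circ> Inr) j" if "j \<in> A c" for j using i that by auto
      have "f c (v \<circ> Inl) (v \<circ> Inr) = f c (v \<circ> Inl) (v(r0 := - v r0) \<circ> Inr)"
        by (rule fd[rule_format, OF cubeI_split(1)[OF v] cubeI_split(2)[OF v] cubeI_split(2)[OF v'] agree])
      then show "gc c (v(r0 := - v r0)) = gc c v" unfolding gc_def l by simp
    qed
  qed
  also have "\<dots> = Phi c a b"
    unfolding Phi_def
  proof (intro sum.cong refl arg_cong2[where f="(*)"] prod.cong)
    fix r :: "'n + nat" and v :: "'n + nat \<Rightarrow> real" assume r: "r \<in> Is k"
    show "ml v (\<lambda>r. if r \<in> K then 0 else Yf r) r = ml v (Yc c a b) r"
      using r by (auto simp: ml_def K_def Yf_def Yc_def D_def Is_def)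
  qed
  finally show ?thesis .
qed

lemma Cs_repr:
  "smoothed_obj \<sigma> k rel q q0 C w f (a, b) = (\<Sum>c\<in>C. w c * Phi c a b)"
  unfolding smoothed_obj_def fst_conv snd_conv
proof (intro sum.cong refl)
  fix c assume c: "c \<in> C"
  show "w c * (\<Sum>S\<in>Pow UNIV. \<Sum>T\<in>Pow {..<k}. fourier_coeff k (f c) S T * (\<Prod>i\<in>S. a $ i) *
             (\<Prod>i\<in>T. atom_mean \<sigma> (rel i) (q i) (q0 i) b)) = w c * Phi c a b"
    using Phi_repr[OF c, of a b] by simp
qed

end




lemma L1_le: "(\<Sum>j\<in>UNIV. \<bar>x $ j\<bar>) \<le> sqrt (real CARD('n)) * norm (x :: real ^ 'n::finite)"
proof -
  have "(\<Sum>j\<in>UNIV. \<bar>x $ j\<bar> * \<bar>1::real\<bar>) \<le> L2_set (\<lambda>j. x $ j) UNIV * L2_set (\<lambda>_. 1::real) (UNIV :: 'n set)"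
    by (rule L2_set_mult_ineq)
  moreover have "L2_set (\<lambda>j. x $ j) UNIV = norm x"
    unfolding norm_vec_def L2_set_def by simp
  moreover have "L2_set (\<lambda>_. 1::real) (UNIV :: 'n set) = sqrt (real CARD('n))"
    by (simp add: L2_set_constant)
  ultimately show ?thesis by (simp add: mult.commute)
qed

lemma cs2:
  fixes p s x y :: real
  assumes "0 \<le> p" "0 \<le> s" "0 \<le> x" "0 \<le> y"
  shows "p * x + s * y \<le> sqrt (p\<^sup>2 + s\<^sup>2) * sqrt (x\<^sup>2 + y\<^sup>2)"
proof -
  have "(p * x + s * y)\<^sup>2 \<le> (p\<^sup>2 + s\<^sup>2) * (x\<^sup>2 + y\<^sup>2)"
  proof -
    have "0 \<le> (p * y - s * x)\<^sup>2" by simp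
    then show ?thesis by (simp add: power2_eq_square algebra_simps)
  qed
  then have "sqrt ((p * x + s * y)\<^sup>2) \<le> sqrt ((p\<^sup>2 + s\<^sup>2) * (x\<^sup>2 + y\<^sup>2))"
    by (rule real_sqrt_le_mono)
  then show ?thesis using assms by (simp add: real_sqrt_mult)
qed

lemma inner_bound:
  fixes qq u :: "real ^ 'm::finite"
  shows "\<bar>qq \<bullet> u\<bar> \<le> norm qq * (\<Sum>l\<in>UNIV. if qq $ l \<noteq> 0 then \<bar>u $ l\<bar> else 0)"
proof -
  have "\<bar>qq \<bullet> u\<bar> = \<bar>\<Sum>l\<in>UNIV. qq $ l * u $ l\<bar>" by (simp add: inner_vec_def)
  also have "\<dots> \<le> (\<Sum>l\<in>UNIV. \<bar>qq $ l * u $ l\<bar>)" by (rule sum_abs)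
  also have "\<dots> \<le> (\<Sum>l\<in>UNIV. norm qq * (if qq $ l \<noteq> 0 then \<bar>u $ l\<bar> else 0))"
  proof (rule sum_mono)
    fix l
    show "\<bar>qq $ l * u $ l\<bar> \<le> norm qq * (if qq $ l \<noteq> 0 then \<bar>u $ l\<bar> else 0)"
      using component_le_norm_cart[of qq l] by (auto simp: abs_mult intro: mult_right_mono)
  qed
  finally show ?thesis by (simp add: sum_distrib_left)
qed

context prob begin

definition beta :: nat where "beta = Max (insert 0 {card {i \<in> A c. q i $ j \<noteq> 0} | c j. c \<in> C})"
definition gam :: real where "gam = sqrt 2 * real beta / (sqrt pi * \<sigma>)"

lemma card_le_beta: "c \<in> C \<Longrightarrow> card {i \<in> A c. q i $ j \<noteq> 0} \<le> beta"
proof -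
  assume c: "c \<in> C"
  have fin: "finite {card {i \<in> A c. q i $ j \<noteq> 0} | c j. c \<in> C}"
  proof -
    have "{card {i \<in> A c. q i $ j \<noteq> 0} | c j. c \<in> C} = (\<lambda>(c, j). card {i \<in> A c. q i $ j \<noteq> 0}) ` (C \<times> UNIV)"
      by auto
    then show ?thesis using C_fin by simp
  qed
  show ?thesis unfolding beta_def using c fin by (intro Max_ge) auto
qed

lemma Kq_pos: "i < k \<Longrightarrow> Kq i > 0"
  unfolding Kq_def using q_nz sigma_pos by auto

definition Yd :: "'c \<Rightarrow> real ^ 'n \<Rightarrow> real ^ 'm \<Rightarrow> real ^ 'n \<Rightarrow> real ^ 'm \<Rightarrow> 'n + nat \<Rightarrow> real" where
  "Yd c a b ha hb r = (case r of Inl j \<Rightarrow> ha $ j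
      | Inr i \<Rightarrow> if i \<in> A c then sg (rel i) * erfd (arg i b) * ((q i \<bullet> hb) / Kq i) else 0)"

definition Ydd :: "'c \<Rightarrow> real ^ 'n \<Rightarrow> real ^ 'm \<Rightarrow> real ^ 'n \<Rightarrow> real ^ 'm \<Rightarrow> real ^ 'n \<Rightarrow> real ^ 'm \<Rightarrow> 'n + nat \<Rightarrow> real" where
  "Ydd c a b ha hb ua ub r = (case r of Inl j \<Rightarrow> 0
      | Inr i \<Rightarrow> if i \<in> A c then sg (rel i) * erfdd (arg i b) * ((q i \<bullet> hb) / Kq i) * ((q i \<bullet> ub) / Kq i) else 0)"

definition Zf :: "'c \<Rightarrow> real ^ 'n \<Rightarrow> real ^ 'm \<Rightarrow> 'n + nat \<Rightarrow> real" where
  "Zf c ua ub r = (case r of Inl j \<Rightarrow> \<bar>ua $ j\<bar>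
      | Inr i \<Rightarrow> if i \<in> A c then 2 / sqrt pi * \<bar>q i \<bullet> ub\<bar> / Kq i else 0)"

lemma arg_line: "arg i (b + t *\<^sub>R hb) = (q i \<bullet> b + t * (q i \<bullet> hb) - q0 i) / Kq i"
  by (simp add: arg_def inner_add_right)

lemma Yc_deriv:
  "((\<lambda>t. Yc c (a + t *\<^sub>R ha) (b + t *\<^sub>R hb) r) has_real_derivative Yd c (a + t *\<^sub>R ha) (b + t *\<^sub>R hb) ha hb r) (at t)"
proof (cases r)
  case (Inl j)
  show ?thesis unfolding Inl Yc_def Yd_def by (auto intro!: derivative_eq_intros)
next
  case (Inr i)
  show ?thesis
  proof (cases "i \<in> A c")
    case True
    have e: "atom_mean \<sigma> (rel i) (q i) (q0 i) (b + t *\<^sub>R hb) = sg (rel i) * erf ((q i \<bullet> b + t * (q i \<bullet> hb) - q0 i) / Kq i) + cst (rel i)" for t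
      by (simp add: atom_mean_alt Kq_def inner_add_right)
    have d0: "((\<lambda>t. (q i \<bullet> b + t * (q i \<bullet> hb) - q0 i) / Kq i) has_real_derivative (q i \<bullet> hb) / Kq i) (at t)"
      by (rule DERIV_cdivide) (auto intro!: derivative_eq_intros)
    have "((\<lambda>t. sg (rel i) * erf ((q i \<bullet> b + t * (q i \<bullet> hb) - q0 i) / Kq i) + cst (rel i)) has_real_derivative
        sg (rel i) * (erfd ((q i \<bullet> b + t * (q i \<bullet> hb) - q0 i) / Kq i) * ((q i \<bullet> hb) / Kq i))) (at t)"
      by (rule DERIV_cong[OF DERIV_add[OF DERIV_cmult[OF erf_deriv[OF d0]] DERIV_const]]) simp
    then show ?thesis unfolding Inr Yc_def Yd_def using True by (simp add: e arg_line mult.assoc)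
  next
    case False
    then show ?thesis unfolding Inr Yc_def Yd_def by simp
  qed
qed

lemma Yd_deriv:
  "((\<lambda>t. Yd c (a + t *\<^sub>R ha) (b + t *\<^sub>R hb) ua ub r) has_real_derivative Ydd c (a + t *\<^sub>R ha) (b + t *\<^sub>R hb) ha hb ua ub r) (at t)"
proof (cases r)
  case (Inl j)
  show ?thesis unfolding Inl Yd_def Ydd_def by simp
next
  case (Inr i)
  show ?thesis
  proof (cases "i \<in> A c")
    case True
    have d0: "((\<lambda>t. (q i \<bullet> b + t * (q i \<bullet> hb) - q0 i) / Kq i) has_real_derivative (q i \<bullet> hb) / Kq i) (at t)"
      by (rule DERIV_cdivide) (auto intro!: derivative_eq_intros)
    have "((\<lambda>t. sg (rel i) * erfd ((q i \<bullet> b + t * (q i \<bullet> hb) - q0 i) / Kq i) * ((q i \<bullet> ub) / Kq i)) has_real_derivative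
        sg (rel i) * (erfdd ((q i \<bullet> b + t * (q i \<bullet> hb) - q0 i) / Kq i) * ((q i \<bullet> hb) / Kq i)) * ((q i \<bullet> ub) / Kq i)) (at t)"
      by (intro DERIV_cmult_right DERIV_cmult erfd_deriv d0)
    then show ?thesis unfolding Inr Yd_def Ydd_def using True by (simp add: arg_line mult.assoc)
  next
    case False
    then show ?thesis unfolding Inr Yd_def Ydd_def by simp
  qed
qed

definition E1cs :: "real ^ 'n \<Rightarrow> real ^ 'm \<Rightarrow> real ^ 'n \<Rightarrow> real ^ 'm \<Rightarrow> real" where
  "E1cs a b ha hb = (\<Sum>c\<in>C. w c * E1f (Is k) (gc c) (Yc c a b) (Yd c a b ha hb))"

definition E2cs :: "real ^ 'n \<Rightarrow> real ^ 'm \<Rightarrow> real ^ 'n \<Rightarrow> real ^ 'm \<Rightarrow> real ^ 'n \<Rightarrow> real ^ 'm \<Rightarrow> real" where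
  "E2cs a b ha hb ua ub = (\<Sum>c\<in>C. w c * E2f (Is k) (gc c) (Yc c a b) (Yd c a b ua ub) (Ydd c a b ha hb ua ub) (Yd c a b ha hb))"

lemma Cs_line_deriv:
  "((\<lambda>t. smoothed_obj \<sigma> k rel q q0 C w f (a + t *\<^sub>R ha, b + t *\<^sub>R hb)) has_real_derivative
     E1cs (a + t *\<^sub>R ha) (b + t *\<^sub>R hb) ha hb) (at t)"
proof -
  have "((\<lambda>t. \<Sum>c\<in>C. w c * Phi c (a + t *\<^sub>R ha) (b + t *\<^sub>R hb)) has_real_derivative
     E1cs (a + t *\<^sub>R ha) (b + t *\<^sub>R hb) ha hb) (at t)"
    unfolding E1cs_def Phi_def
    by (intro DERIV_sum DERIV_cmult E0_deriv[OF finite_Is, where y="\<lambda>r t. Yc _ (a + t *\<^sub>R ha) (b + t *\<^sub>R hb) r", simplified]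
        Yc_deriv)
  then show ?thesis by (simp add: Cs_repr)
qed

lemma E1_line_deriv:
  "((\<lambda>t. E1cs (a + t *\<^sub>R ha) (b + t *\<^sub>R hb) ua ub) has_real_derivative
     E2cs (a + t *\<^sub>R ha) (b + t *\<^sub>R hb) ha hb ua ub) (at t)"
  unfolding E1cs_def E2cs_def
  by (intro DERIV_sum DERIV_cmult E1_deriv[OF finite_Is, where y="\<lambda>r t. Yc _ (a + t *\<^sub>R ha) (b + t *\<^sub>R hb) r"
        and z="\<lambda>r t. Yd _ (a + t *\<^sub>R ha) (b + t *\<^sub>R hb) ua ub r", simplified] Yc_deriv Yd_deriv)

lemma gam_nonneg: "0 \<le> gam"
  unfolding gam_def using sigma_pos by simp

lemma Yc_bound: "(\<forall>j. \<bar>a $ j\<bar> \<le> 1) \<Longrightarrow> \<bar>Yc c a b r\<bar> \<le> 1"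
  by (cases r) (auto simp: Yc_def atom_mean_bound)

lemma Kq_nonneg: "0 \<le> Kq i"
  unfolding Kq_def using sigma_pos by simp

lemma Zf_nonneg: "0 \<le> Zf c ua ub r"
  by (cases r) (auto simp: Zf_def intro!: divide_nonneg_nonneg mult_nonneg_nonneg Kq_nonneg)

lemma Yd_bound:
  assumes c: "c \<in> C"
  shows "\<bar>Yd c a b ua ub r\<bar> \<le> Zf c ua ub r"
proof (cases r)
  case (Inl j)
  then show ?thesis by (simp add: Yd_def Zf_def)
next
  case (Inr i)
  show ?thesis
  proof (cases "i \<in> A c")
    case True
    then have K: "Kq i > 0" using A_atoms c Kq_pos by auto
    have "\<bar>sg (rel i) * erfd (arg i b) * (q i \<bullet> ub / Kq i)\<bar> = \<bar>sg (rel i)\<bar> * \<bar>erfd (arg i b)\<bar> * (\<bar>q i \<bullet> ub\<bar> / Kq i)"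
      using K by (simp add: abs_mult)
    also have "\<dots> \<le> 1 * (2 / sqrt pi) * (\<bar>q i \<bullet> ub\<bar> / Kq i)"
      using K by (intro mult_mono sg_abs erfd_bound) auto
    finally show ?thesis using True Inr by (simp add: Yd_def Zf_def)
  next
    case False
    then show ?thesis using Inr by (simp add: Yd_def Zf_def)
  qed
qed

lemma alg1: "1 * (2 / s)\<^sup>2 * (x / K) * (y / K) = (2 / s * y / K) * (2 / s * x / (K::real))"
  by (simp add: power2_eq_square divide_inverse mult_ac)

lemma Ydd_bound:
  assumes c: "c \<in> C"
  shows "\<bar>Ydd c a b ha hb ua ub r\<bar> \<le> Zf c ua ub r * Zf c ha hb r"
proof (cases r)
  case (Inl j)
  then show ?thesis by (simp add: Ydd_def Zf_def)
next
  case (Inr i)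
  show ?thesis
  proof (cases "i \<in> A c")
    case True
    then have K: "Kq i > 0" using A_atoms c Kq_pos by auto
    have "\<bar>sg (rel i) * erfdd (arg i b) * (q i \<bullet> hb / Kq i) * (q i \<bullet> ub / Kq i)\<bar>
        = \<bar>sg (rel i)\<bar> * \<bar>erfdd (arg i b)\<bar> * (\<bar>q i \<bullet> hb\<bar> / Kq i) * (\<bar>q i \<bullet> ub\<bar> / Kq i)"
      using K by (simp add: abs_mult)
    also have "\<dots> \<le> 1 * (2 / sqrt pi)\<^sup>2 * (\<bar>q i \<bullet> hb\<bar> / Kq i) * (\<bar>q i \<bullet> ub\<bar> / Kq i)"
      using K by (intro mult_mono sg_abs erfdd_bound) auto
    also have "\<dots> = (2 / sqrt pi * \<bar>q i \<bullet> ub\<bar> / Kq i) * (2 / sqrt pi * \<bar>q i \<bullet> hb\<bar> / Kq i)"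
      by (rule alg1)
    finally show ?thesis using True Inr by (simp add: Ydd_def Zf_def)
  next
    case False
    then show ?thesis using Inr by (simp add: Ydd_def Zf_def)
  qed
qed

lemma c0_beta: "2 / (sqrt pi * sqrt 2 * \<sigma>) * real beta = gam"
proof -
  have s2: "2 = sqrt 2 * (sqrt 2 :: real)" by simp
  have "2 / (sqrt pi * sqrt 2 * \<sigma>) = sqrt 2 / (sqrt pi * \<sigma>)"
    using sigma_pos by (subst s2) (simp add: field_simps)
  then show ?thesis by (simp add: gam_def)
qed

lemma Zsum:
  assumes c: "c \<in> C"
  shows "sum (Zf c ua ub) (Is k) \<le> sqrt (real CARD('n) + real CARD('m) * gam\<^sup>2) * sqrt ((norm ua)\<^sup>2 + (norm ub)\<^sup>2)"
proof -
  define T where "T i = 2 / sqrt pi * \<bar>q i \<bullet> ub\<bar> / Kq i" for i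
  define c0 where "c0 = 2 / (sqrt pi * sqrt 2 * \<sigma>)"
  define N where "N i l = (if q i $ l \<noteq> 0 then \<bar>ub $ l\<bar> else 0)" for i l
  have Ac: "A c \<subseteq> {..<k}" using A_atoms c by auto
  have finA: "finite (A c)" using Ac finite_subset by blast
  have "sum (Zf c ua ub) (Is k) = (\<Sum>j\<in>UNIV. \<bar>ua $ j\<bar>) + (\<Sum>i\<in>{..<k}. if i \<in> A c then T i else 0)"
    unfolding T_def by (simp add: sum_Is Zf_def)
  also have "(\<Sum>i\<in>{..<k}. if i \<in> A c then T i else 0) = (\<Sum>i\<in>A c. T i)"
    using Ac by (simp add: sum.inter_restrict[symmetric] Int_absorb1 inf.absorb2)
  also have "(\<Sum>i\<in>A c. T i) \<le> (\<Sum>i\<in>A c. c0 * (\<Sum>l\<in>UNIV. N i l))"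
  proof (rule sum_mono)
    fix i assume i: "i \<in> A c"
    then have ik: "i < k" using Ac by auto
    have nq: "norm (q i) > 0" using q_nz ik by auto
    have "T i = 2 / sqrt pi * \<bar>q i \<bullet> ub\<bar> / (sqrt 2 * norm (q i) * \<sigma>)" by (simp add: T_def Kq_def)
    also have "\<dots> \<le> 2 / sqrt pi * (norm (q i) * (\<Sum>l\<in>UNIV. N i l)) / (sqrt 2 * norm (q i) * \<sigma>)"
      using inner_bound[of "q i" ub] sigma_pos nq unfolding N_def
      by (intro divide_right_mono mult_left_mono) auto
    also have "\<dots> = c0 * (\<Sum>l\<in>UNIV. N i l)"
      using nq sigma_pos by (simp add: c0_def field_simps)
    finally show "T i \<le> c0 * (\<Sum>l\<in>UNIV. N i l)" .
  qed
  also have "\<dots> = c0 * (\<Sum>l\<in>UNIV. \<bar>ub $ l\<bar> * real (card {i \<in> A c. q i $ l \<noteq> 0}))"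
  proof -
    have "(\<Sum>i\<in>A c. \<Sum>l\<in>UNIV. N i l) = (\<Sum>l\<in>UNIV. \<Sum>i\<in>A c. N i l)" by (rule sum.swap)
    also have "\<dots> = (\<Sum>l\<in>UNIV. \<bar>ub $ l\<bar> * real (card {i \<in> A c. q i $ l \<noteq> 0}))"
    proof (rule sum.cong[OF refl])
      fix l
      have "(\<Sum>i\<in>A c. N i l) = (\<Sum>i\<in>{i \<in> A c. q i $ l \<noteq> 0}. \<bar>ub $ l\<bar>)"
        unfolding N_def by (rule sum.inter_filter[symmetric, OF finA])
      then show "(\<Sum>i\<in>A c. N i l) = \<bar>ub $ l\<bar> * real (card {i \<in> A c. q i $ l \<noteq> 0})" by simp
    qed
    finally have X: "(\<Sum>i\<in>A c. \<Sum>l\<in>UNIV. N i l) = (\<Sum>l\<in>UNIV. \<bar>ub $ l\<bar> * real (card {i \<in> A c. q i $ l \<noteq> 0}))" .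
    show ?thesis by (simp only: sum_distrib_left[symmetric] X)
  qed
  also have "\<dots> \<le> c0 * (\<Sum>l\<in>UNIV. \<bar>ub $ l\<bar> * real beta)"
    using card_le_beta[OF c] sigma_pos unfolding c0_def
    by (intro mult_left_mono sum_mono) auto
  also have "\<dots> = (c0 * real beta) * (\<Sum>l\<in>UNIV. \<bar>ub $ l\<bar>)"
    by (simp add: sum_distrib_left sum_distrib_right mult_ac)
  also have "\<dots> = gam * (\<Sum>l\<in>UNIV. \<bar>ub $ l\<bar>)"
    by (simp only: c0_def c0_beta)
  finally have "sum (Zf c ua ub) (Is k) \<le> (\<Sum>j\<in>UNIV. \<bar>ua $ j\<bar>) + gam * (\<Sum>l\<in>UNIV. \<bar>ub $ l\<bar>)"
    by linarith
  also have "\<dots> \<le> sqrt (real CARD('n)) * norm ua + gam * (sqrt (real CARD('m)) * norm ub)"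
    using L1_le[of ua] L1_le[of ub] gam_nonneg by (intro add_mono mult_left_mono) auto
  also have "\<dots> = sqrt (real CARD('n)) * norm ua + (gam * sqrt (real CARD('m))) * norm ub" by simp
  also have "\<dots> \<le> sqrt ((sqrt (real CARD('n)))\<^sup>2 + (gam * sqrt (real CARD('m)))\<^sup>2) * sqrt ((norm ua)\<^sup>2 + (norm ub)\<^sup>2)"
    using gam_nonneg by (intro cs2) auto
  also have "(sqrt (real CARD('n)))\<^sup>2 + (gam * sqrt (real CARD('m)))\<^sup>2 = real CARD('n) + real CARD('m) * gam\<^sup>2"
    by (simp add: power_mult_distrib)
  finally show ?thesis .
qed

lemma E1cs_bound:
  assumes a: "\<forall>j. \<bar>a $ j\<bar> \<le> 1"
  shows "\<bar>E1cs a b ha hb\<bar> \<le> (\<Sum>c\<in>C. w c) * (sqrt (real CARD('n) + real CARD('m) * gam\<^sup>2) * sqrt ((norm ha)\<^sup>2 + (norm hb)\<^sup>2))"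
proof -
  let ?S = "sqrt (real CARD('n) + real CARD('m) * gam\<^sup>2) * sqrt ((norm ha)\<^sup>2 + (norm hb)\<^sup>2)"
  have "\<bar>E1cs a b ha hb\<bar> \<le> (\<Sum>c\<in>C. \<bar>w c * E1f (Is k) (gc c) (Yc c a b) (Yd c a b ha hb)\<bar>)"
    unfolding E1cs_def by (rule sum_abs)
  also have "\<dots> \<le> (\<Sum>c\<in>C. w c * ?S)"
  proof (rule sum_mono)
    fix c assume c: "c \<in> C"
    have "\<bar>E1f (Is k) (gc c) (Yc c a b) (Yd c a b ha hb)\<bar> \<le> (\<Sum>r\<in>Is k. \<bar>Yd c a b ha hb r\<bar>)"
      by (rule E1f_bound[OF finite_Is]) (auto intro: gc_bound[OF c] Yc_bound[OF a])
    also have "\<dots> \<le> sum (Zf c ha hb) (Is k)" by (intro sum_mono Yd_bound[OF c])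
    also have "\<dots> \<le> ?S" by (rule Zsum[OF c])
    moreover have wc: "0 < w c" using w_pos c by blast
    ultimately show "\<bar>w c * E1f (Is k) (gc c) (Yc c a b) (Yd c a b ha hb)\<bar> \<le> w c * ?S"
      by (simp add: abs_mult mult_left_mono)
  qed
  also have "\<dots> = (\<Sum>c\<in>C. w c) * ?S" by (simp add: sum_distrib_right)
  finally show ?thesis .
qed

lemma E2cs_bound:
  assumes a: "\<forall>j. \<bar>a $ j\<bar> \<le> 1"
  shows "\<bar>E2cs a b ha hb ua ub\<bar> \<le> (\<Sum>c\<in>C. w c) *
     ((sqrt (real CARD('n) + real CARD('m) * gam\<^sup>2) * sqrt ((norm ua)\<^sup>2 + (norm ub)\<^sup>2)) *
      (sqrt (real CARD('n) + real CARD('m) * gam\<^sup>2) * sqrt ((norm ha)\<^sup>2 + (norm hb)\<^sup>2)))"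
proof -
  let ?Su = "sqrt (real CARD('n) + real CARD('m) * gam\<^sup>2) * sqrt ((norm ua)\<^sup>2 + (norm ub)\<^sup>2)"
  let ?Sh = "sqrt (real CARD('n) + real CARD('m) * gam\<^sup>2) * sqrt ((norm ha)\<^sup>2 + (norm hb)\<^sup>2)"
  have "\<bar>E2cs a b ha hb ua ub\<bar> \<le> (\<Sum>c\<in>C. \<bar>w c * E2f (Is k) (gc c) (Yc c a b) (Yd c a b ua ub) (Ydd c a b ha hb ua ub) (Yd c a b ha hb)\<bar>)"
    unfolding E2cs_def by (rule sum_abs)
  also have "\<dots> \<le> (\<Sum>c\<in>C. w c * (?Su * ?Sh))"
  proof (rule sum_mono)
    fix c assume c: "c \<in> C"
    have "\<bar>E2f (Is k) (gc c) (Yc c a b) (Yd c a b ua ub) (Ydd c a b ha hb ua ub) (Yd c a b ha hb)\<bar>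
        \<le> (\<Sum>r\<in>Is k. \<bar>Ydd c a b ha hb ua ub r\<bar> + \<bar>Yd c a b ua ub r\<bar> * (\<Sum>r'\<in>Is k - {r}. \<bar>Yd c a b ha hb r'\<bar>))"
      by (rule E2f_bound[OF finite_Is]) (auto intro: gc_bound[OF c] Yc_bound[OF a])
    also have "\<dots> \<le> sum (Zf c ua ub) (Is k) * sum (Zf c ha hb) (Is k)"
      by (rule sum_prod_ZY[OF finite_Is]) (auto intro: Yd_bound[OF c] Ydd_bound[OF c])
    also have "\<dots> \<le> ?Su * ?Sh"
      by (intro mult_mono Zsum[OF c]) (auto intro: sum_nonneg Zf_nonneg)
    moreover have wc: "0 < w c" using w_pos c by blast
    ultimately show "\<bar>w c * E2f (Is k) (gc c) (Yc c a b) (Yd c a b ua ub) (Ydd c a b ha hb ua ub) (Yd c a b ha hb)\<bar> \<le> w c * (?Su * ?Sh)"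
      by (simp add: abs_mult mult_left_mono)
  qed
  also have "\<dots> = (\<Sum>c\<in>C. w c) * (?Su * ?Sh)" by (simp add: sum_distrib_right)
  finally show ?thesis .
qed

end




lemma differentiable_prod':
  assumes "finite I" "\<forall>i\<in>I. f i differentiable (at x)"
  shows "(\<lambda>x. \<Prod>i\<in>I. (f i x :: real)) differentiable (at x)"
  using assms
proof (induction I rule: finite_induct)
  case empty
  then show ?case by simp
next
  case (insert i I)
  then show ?case by (simp add: differentiable_mult)
qed

lemma erf_differentiable: "erf differentiable (at x)"
  using erf_deriv_raw[of x] by (auto intro: differentiableI dest: has_field_derivative_imp_has_derivative)

lemma linear_repr:
  fixes D :: "'a::euclidean_space \<Rightarrow> real"
  assumes "linear D"
  shows "D = (\<lambda>h. (\<Sum>b\<in>Basis. D b *\<^sub>R b) \<bullet> h)"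
proof
  fix h :: 'a
  have "D h = D (\<Sum>b\<in>Basis. (h \<bullet> b) *\<^sub>R b)" by (simp add: euclidean_representation)
  also have "\<dots> = (\<Sum>b\<in>Basis. (h \<bullet> b) * D b)"
    using assms by (simp add: real_vector.linear_sum linear_cmul)
  also have "\<dots> = (\<Sum>b\<in>Basis. D b * (b \<bullet> h))"
    by (intro sum.cong refl) (simp add: inner_commute)
  also have "\<dots> = (\<Sum>b\<in>Basis. D b *\<^sub>R b) \<bullet> h"
    by (simp add: inner_sum_left)
  finally show "D h = (\<Sum>b\<in>Basis. D b *\<^sub>R b) \<bullet> h" .
qed

lemma grad_prop:
  fixes F :: "'a::euclidean_space \<Rightarrow> real"
  assumes "F differentiable (at p)"
  shows "(F has_derivative (\<lambda>h. grad F p \<bullet> h)) (at p)"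
proof -
  obtain D where D: "(F has_derivative D) (at p)" using assms unfolding differentiable_def by blast
  then have "D = (\<lambda>h. (\<Sum>b\<in>Basis. D b *\<^sub>R b) \<bullet> h)" by (intro linear_repr has_derivative_linear)
  then have "\<exists>g. (F has_derivative (\<lambda>h. g \<bullet> h)) (at p)" using D by metis
  then show ?thesis unfolding grad_def by (rule someI_ex)
qed

context prob begin

lemma Yc_differentiable:
  "(\<lambda>p. Yc c (fst p) (snd p) r) differentiable (at p)"
proof (cases r)
  case (Inl j)
  have "bounded_linear (\<lambda>p::(real^'n) \<times> (real^'m). fst p $ j)"
    by (rule bounded_linear_compose[OF bounded_linear_vec_nth bounded_linear_fst])
  then show ?thesis unfolding Inl Yc_def by (simp add: bounded_linear_imp_differentiable)
next
  case (Inr i)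
  show ?thesis
  proof (cases "i \<in> A c")
    case True
    have bl: "bounded_linear (\<lambda>p::(real^'n) \<times> (real^'m). (q i \<bullet> snd p) / Kq i)"
      by (intro bounded_linear_compose[OF bounded_linear_divide] bounded_linear_inner_right_comp bounded_linear_snd)
    have "(\<lambda>p::(real^'n) \<times> (real^'m). (q i \<bullet> snd p) / Kq i - q0 i / Kq i) differentiable (at p)"
      by (intro differentiable_diff bounded_linear_imp_differentiable[OF bl] differentiable_const)
    then have d: "(\<lambda>p::(real^'n) \<times> (real^'m). arg i (snd p)) differentiable (at p)"
      by (simp add: arg_def diff_divide_distrib)
    have "(erf \<circ> (\<lambda>p::(real^'n) \<times> (real^'m). arg i (snd p))) differentiable (at p)"
      by (rule differentiable_chain_at[OF d erf_differentiable])
    then have "(\<lambda>p::(real^'n) \<times> (real^'m). sg (rel i) * erf (arg i (snd p)) + cst (rel i)) differentiable (at p)"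
      by (intro differentiable_add differentiable_mult differentiable_const) (simp add: o_def)
    then show ?thesis unfolding Inr Yc_def using True by (simp add: atom_mean_alt arg_def Kq_def)
  next
    case False
    then show ?thesis unfolding Inr Yc_def by simp
  qed
qed

lemma Cs_fun: "smoothed_obj \<sigma> k rel q q0 C w f = (\<lambda>p. \<Sum>c\<in>C. w c * Phi c (fst p) (snd p))"
  by (rule ext) (metis Cs_repr prod.collapse)

lemma Cs_differentiable: "smoothed_obj \<sigma> k rel q q0 C w f differentiable (at p)"
  unfolding Cs_fun Phi_def ml_def
  by (intro differentiable_sum ballI differentiable_mult differentiable_const differentiable_prod' finite_Is
        differentiable_divide differentiable_add Yc_differentiable C_fin finite_cubeI) auto

lemma grad_dir:
  "grad (smoothed_obj \<sigma> k rel q q0 C w f) (a, b) \<bullet> (ha, hb) = E1cs a b ha hb"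
proof -
  let ?Cs = "smoothed_obj \<sigma> k rel q q0 C w f"
  let ?G = "grad ?Cs (a, b)"
  have g: "(?Cs has_derivative (\<lambda>h. ?G \<bullet> h)) (at (a, b))"
    by (rule grad_prop[OF Cs_differentiable])
  have l: "((\<lambda>t::real. (a, b) + t *\<^sub>R (ha, hb)) has_derivative (\<lambda>s. s *\<^sub>R (ha, hb))) (at 0)"
    by (auto intro!: derivative_eq_intros)
  have "((?Cs \<circ> (\<lambda>t::real. (a, b) + t *\<^sub>R (ha, hb))) has_derivative ((\<lambda>h. ?G \<bullet> h) \<circ> (\<lambda>s. s *\<^sub>R (ha, hb)))) (at 0)"
    using diff_chain_at[OF l] g by simp
  then have d1: "((\<lambda>t. ?Cs (a + t *\<^sub>R ha, b + t *\<^sub>R hb)) has_derivative (\<lambda>s. ?G \<bullet> (s *\<^sub>R ha, s *\<^sub>R hb))) (at 0)"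
    by (simp add: o_def)
  have "((\<lambda>t. ?Cs (a + t *\<^sub>R ha, b + t *\<^sub>R hb)) has_real_derivative E1cs (a + 0 *\<^sub>R ha) (b + 0 *\<^sub>R hb) ha hb) (at 0)"
    by (rule Cs_line_deriv)
  then have d2: "((\<lambda>t. ?Cs (a + t *\<^sub>R ha, b + t *\<^sub>R hb)) has_derivative (\<lambda>s. E1cs a b ha hb * s)) (at 0)"
    by (simp add: has_field_derivative_def)
  have "(\<lambda>s. ?G \<bullet> (s *\<^sub>R ha, s *\<^sub>R hb)) = (\<lambda>s. E1cs a b ha hb * s)"
    by (rule has_derivative_unique[OF d1 d2])
  from fun_cong[OF this, of 1] show ?thesis by simp
qed

lemma alg2: "(al::real) * ((s * x) * (s * n)) = (al * (s * s) * n) * x"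
  by (simp add: mult_ac)

lemma alpha_nonneg: "0 \<le> (\<Sum>c\<in>C. w c)"
  using w_pos by (intro sum_nonneg) (auto intro: less_imp_le)

lemma seg:
  assumes "\<forall>i. \<bar>a $ i\<bar> \<le> 1" "\<forall>i. \<bar>a' $ i\<bar> \<le> 1" "0 \<le> t" "t \<le> 1"
  shows "\<forall>i. \<bar>(a + t *\<^sub>R (a' - a)) $ i\<bar> \<le> (1::real)"
proof
  fix i
  have e: "(a + t *\<^sub>R (a' - a)) $ i = (1 - t) * a $ i + t * a' $ i" by (simp add: algebra_simps)
  have "\<bar>(1 - t) * a $ i + t * a' $ i\<bar> \<le> (1 - t) * \<bar>a $ i\<bar> + t * \<bar>a' $ i\<bar>"
  proof -
    have "\<bar>(1 - t) * a $ i + t * a' $ i\<bar> \<le> \<bar>(1 - t) * a $ i\<bar> + \<bar>t * a' $ i\<bar>" by (rule abs_triangle_ineq)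
    also have "\<dots> = (1 - t) * \<bar>a $ i\<bar> + t * \<bar>a' $ i\<bar>" using assms(3,4) by (simp add: abs_mult)
    finally show ?thesis .
  qed
  also have "\<dots> \<le> (1 - t) * 1 + t * 1"
    using assms by (intro add_mono mult_left_mono) auto
  finally show "\<bar>(a + t *\<^sub>R (a' - a)) $ i\<bar> \<le> 1" using e by simp
qed

lemma claim1:
  assumes a: "\<forall>i. \<bar>a $ i\<bar> \<le> 1" and a': "\<forall>i. \<bar>a' $ i\<bar> \<le> 1"
  shows "\<bar>smoothed_obj \<sigma> k rel q q0 C w f (a', b') - smoothed_obj \<sigma> k rel q q0 C w f (a, b)\<bar>
    \<le> (\<Sum>c\<in>C. w c) * (sqrt (real CARD('n) + real CARD('m) * gam\<^sup>2) * sqrt ((norm (a' - a))\<^sup>2 + (norm (b' - b))\<^sup>2))"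
proof -
  let ?g = "\<lambda>t. smoothed_obj \<sigma> k rel q q0 C w f (a + t *\<^sub>R (a' - a), b + t *\<^sub>R (b' - b))"
  obtain z where z: "0 < z" "z < 1"
    "?g 1 - ?g 0 = (1 - 0) * E1cs (a + z *\<^sub>R (a' - a)) (b + z *\<^sub>R (b' - b)) (a' - a) (b' - b)"
    using MVT2[of 0 1 ?g "\<lambda>t. E1cs (a + t *\<^sub>R (a' - a)) (b + t *\<^sub>R (b' - b)) (a' - a) (b' - b)"]
      Cs_line_deriv by auto
  have "\<bar>E1cs (a + z *\<^sub>R (a' - a)) (b + z *\<^sub>R (b' - b)) (a' - a) (b' - b)\<bar>
     \<le> (\<Sum>c\<in>C. w c) * (sqrt (real CARD('n) + real CARD('m) * gam\<^sup>2) * sqrt ((norm (a' - a))\<^sup>2 + (norm (b' - b))\<^sup>2))"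
    by (rule E1cs_bound[OF seg[OF a a']]) (use z in auto)
  then show ?thesis using z by simp
qed

lemma claim2:
  assumes a: "\<forall>i. \<bar>a $ i\<bar> \<le> 1" and a': "\<forall>i. \<bar>a' $ i\<bar> \<le> 1"
  shows "norm (grad (smoothed_obj \<sigma> k rel q q0 C w f) (a', b') - grad (smoothed_obj \<sigma> k rel q q0 C w f) (a, b))
    \<le> (\<Sum>c\<in>C. w c) * (sqrt (real CARD('n) + real CARD('m) * gam\<^sup>2) * sqrt (real CARD('n) + real CARD('m) * gam\<^sup>2))
       * sqrt ((norm (a' - a))\<^sup>2 + (norm (b' - b))\<^sup>2)"
proof -
  let ?G = "grad (smoothed_obj \<sigma> k rel q q0 C w f)"
  let ?S = "sqrt (real CARD('n) + real CARD('m) * gam\<^sup>2)"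
  let ?nh = "sqrt ((norm (a' - a))\<^sup>2 + (norm (b' - b))\<^sup>2)"
  define u where "u = ?G (a', b') - ?G (a, b)"
  define ua where "ua = fst u"
  define ub where "ub = snd u"
  have u: "u = (ua, ub)" by (simp add: ua_def ub_def)
  let ?psi = "\<lambda>t. E1cs (a + t *\<^sub>R (a' - a)) (b + t *\<^sub>R (b' - b)) ua ub"
  obtain z where z: "0 < z" "z < 1"
    "?psi 1 - ?psi 0 = (1 - 0) * E2cs (a + z *\<^sub>R (a' - a)) (b + z *\<^sub>R (b' - b)) (a' - a) (b' - b) ua ub"
    using MVT2[of 0 1 ?psi "\<lambda>t. E2cs (a + t *\<^sub>R (a' - a)) (b + t *\<^sub>R (b' - b)) (a' - a) (b' - b) ua ub"]
      E1_line_deriv by auto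
  have p1: "?psi 1 = ?G (a', b') \<bullet> u" unfolding u by (simp add: grad_dir[symmetric])
  have p0: "?psi 0 = ?G (a, b) \<bullet> u" unfolding u by (simp add: grad_dir[symmetric])
  have "?psi 1 - ?psi 0 = u \<bullet> u" unfolding p1 p0 u_def by (simp add: inner_diff_left)
  then have nu2: "(norm u)\<^sup>2 = E2cs (a + z *\<^sub>R (a' - a)) (b + z *\<^sub>R (b' - b)) (a' - a) (b' - b) ua ub"
    using z by (simp add: power2_norm_eq_inner)
  have nu: "norm u = sqrt ((norm ua)\<^sup>2 + (norm ub)\<^sup>2)" unfolding u by (simp add: norm_Pair)
  have "\<bar>E2cs (a + z *\<^sub>R (a' - a)) (b + z *\<^sub>R (b' - b)) (a' - a) (b' - b) ua ub\<bar>
     \<le> (\<Sum>c\<in>C. w c) * ((?S * sqrt ((norm ua)\<^sup>2 + (norm ub)\<^sup>2)) * (?S * ?nh))"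
    by (rule E2cs_bound[OF seg[OF a a']]) (use z in auto)
  then have "(norm u)\<^sup>2 \<le> (\<Sum>c\<in>C. w c) * ((?S * norm u) * (?S * ?nh))"
    unfolding nu2 nu[symmetric] by linarith
  also have "\<dots> = ((\<Sum>c\<in>C. w c) * (?S * ?S) * ?nh) * norm u" by (rule alg2)
  finally have key: "(norm u)\<^sup>2 \<le> ((\<Sum>c\<in>C. w c) * (?S * ?S) * ?nh) * norm u" .
  have nn: "0 \<le> (\<Sum>c\<in>C. w c) * (?S * ?S) * ?nh"
    by (intro mult_nonneg_nonneg alpha_nonneg) auto
  have "norm u \<le> (\<Sum>c\<in>C. w c) * (?S * ?S) * ?nh"
  proof (cases "norm u = 0")
    case True
    then show ?thesis using nn by simp
  next
    case False
    then have pos: "0 < norm u" by simp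
    have "norm u * norm u \<le> ((\<Sum>c\<in>C. w c) * (?S * ?S) * ?nh) * norm u"
      using key by (simp only: power2_eq_square)
    then show ?thesis using pos by (rule mult_right_le_imp_le)
  qed
  then show ?thesis by (simp only: u_def)
qed

lemma claim3:
  assumes a: "\<forall>i. \<bar>a $ i\<bar> \<le> 1" and a': "\<forall>i. \<bar>a' $ i\<bar> \<le> 1"
  shows "\<bar>smoothed_obj \<sigma> k rel q q0 C w f (a', b') - smoothed_obj \<sigma> k rel q q0 C w f (a, b)
      - fst (grad (smoothed_obj \<sigma> k rel q q0 C w f) (a, b)) \<bullet> (a' - a)
      - snd (grad (smoothed_obj \<sigma> k rel q q0 C w f) (a, b)) \<bullet> (b' - b)\<bar>
    \<le> ((\<Sum>c\<in>C. w c) * (sqrt (real CARD('n) + real CARD('m) * gam\<^sup>2) * sqrt (real CARD('n) + real CARD('m) * gam\<^sup>2))) / 2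
       * ((norm (a' - a))\<^sup>2 + (norm (b' - b))\<^sup>2)"
proof -
  let ?Cs = "smoothed_obj \<sigma> k rel q q0 C w f"
  let ?G = "grad (smoothed_obj \<sigma> k rel q q0 C w f)"
  let ?S = "sqrt (real CARD('n) + real CARD('m) * gam\<^sup>2)"
  define Lc where "Lc = (\<Sum>c\<in>C. w c) * (?S * ?S)"
  define ha where "ha = a' - a"
  define hb where "hb = b' - b"
  define nh2 where "nh2 = (norm ha)\<^sup>2 + (norm hb)\<^sup>2"
  define nh where "nh = sqrt nh2"
  define K0 where "K0 = ?G (a, b) \<bullet> (ha, hb)"
  have nh2: "nh * nh = nh2" unfolding nh_def nh2_def by simp
  have nhn: "0 \<le> nh" unfolding nh_def nh2_def by simp
  have Lcn: "0 \<le> Lc" unfolding Lc_def by (intro mult_nonneg_nonneg alpha_nonneg) auto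
  define phi where "phi t = ?Cs (a + t *\<^sub>R ha, b + t *\<^sub>R hb) - t * K0" for t
  have dphi: "(phi has_real_derivative (E1cs (a + t *\<^sub>R ha) (b + t *\<^sub>R hb) ha hb - K0)) (at t)" for t
    unfolding phi_def[abs_def]
    by (rule DERIV_cong[OF DERIV_diff[OF Cs_line_deriv DERIV_cmult_right[OF DERIV_ident]]]) simp
  have bnd: "\<bar>E1cs (a + t *\<^sub>R ha) (b + t *\<^sub>R hb) ha hb - K0\<bar> \<le> Lc * nh2 * t" if t: "0 \<le> t" "t \<le> 1" for t
  proof -
    have "E1cs (a + t *\<^sub>R ha) (b + t *\<^sub>R hb) ha hb - K0 = (?G (a + t *\<^sub>R ha, b + t *\<^sub>R hb) - ?G (a, b)) \<bullet> (ha, hb)"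
      unfolding K0_def by (simp add: grad_dir[symmetric] inner_diff_left)
    also have "\<bar>\<dots>\<bar> \<le> norm (?G (a + t *\<^sub>R ha, b + t *\<^sub>R hb) - ?G (a, b)) * norm (ha, hb)"
      by (rule Cauchy_Schwarz_ineq2)
    also have "norm (ha, hb) = nh" unfolding nh_def nh2_def by (simp add: norm_Pair)
    also have "norm (?G (a + t *\<^sub>R ha, b + t *\<^sub>R hb) - ?G (a, b))
        \<le> Lc * sqrt ((norm ((a + t *\<^sub>R ha) - a))\<^sup>2 + (norm ((b + t *\<^sub>R hb) - b))\<^sup>2)"
      unfolding Lc_def using claim2[OF a seg[OF a a' t], of "b + t *\<^sub>R hb" b] unfolding ha_def by simp
    also have "sqrt ((norm ((a + t *\<^sub>R ha) - a))\<^sup>2 + (norm ((b + t *\<^sub>R hb) - b))\<^sup>2) = t * nh"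
    proof -
      have "(norm ((a + t *\<^sub>R ha) - a))\<^sup>2 + (norm ((b + t *\<^sub>R hb) - b))\<^sup>2 = t\<^sup>2 * nh2"
        using t unfolding nh2_def by (simp add: power_mult_distrib algebra_simps)
      moreover have "0 \<le> nh2" unfolding nh2_def by simp
      ultimately show ?thesis using t unfolding nh_def by (simp add: real_sqrt_mult)
    qed
    finally have "\<bar>E1cs (a + t *\<^sub>R ha) (b + t *\<^sub>R hb) ha hb - K0\<bar> \<le> Lc * (t * nh) * nh"
      using nhn by (simp add: mult_right_mono)
    also have "\<dots> = Lc * nh2 * t" using nh2 by (simp add: mult_ac)
    finally show ?thesis .
  qed
  define chi1 where "chi1 t = phi t - Lc * nh2 * t\<^sup>2 / 2" for t
  define chi2 where "chi2 t = phi t + Lc * nh2 * t\<^sup>2 / 2" for t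
  have dchi1: "(chi1 has_real_derivative (E1cs (a + t *\<^sub>R ha) (b + t *\<^sub>R hb) ha hb - K0 - Lc * nh2 * t)) (at t)" for t
    unfolding chi1_def[abs_def] by (auto intro!: derivative_eq_intros dphi)
  have dchi2: "(chi2 has_real_derivative (E1cs (a + t *\<^sub>R ha) (b + t *\<^sub>R hb) ha hb - K0 + Lc * nh2 * t)) (at t)" for t
    unfolding chi2_def[abs_def] by (auto intro!: derivative_eq_intros dphi)
  obtain z1 where z1: "0 < z1" "z1 < 1"
    "chi1 1 - chi1 0 = (1 - 0) * (E1cs (a + z1 *\<^sub>R ha) (b + z1 *\<^sub>R hb) ha hb - K0 - Lc * nh2 * z1)"
    using MVT2[of 0 1 chi1 "\<lambda>t. E1cs (a + t *\<^sub>R ha) (b + t *\<^sub>R hb) ha hb - K0 - Lc * nh2 * t"] dchi1 by auto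
  obtain z2 where z2: "0 < z2" "z2 < 1"
    "chi2 1 - chi2 0 = (1 - 0) * (E1cs (a + z2 *\<^sub>R ha) (b + z2 *\<^sub>R hb) ha hb - K0 + Lc * nh2 * z2)"
    using MVT2[of 0 1 chi2 "\<lambda>t. E1cs (a + t *\<^sub>R ha) (b + t *\<^sub>R hb) ha hb - K0 + Lc * nh2 * t"] dchi2 by auto
  have b1: "\<bar>E1cs (a + z1 *\<^sub>R ha) (b + z1 *\<^sub>R hb) ha hb - K0\<bar> \<le> Lc * nh2 * z1" using bnd z1 by auto
  have b2: "\<bar>E1cs (a + z2 *\<^sub>R ha) (b + z2 *\<^sub>R hb) ha hb - K0\<bar> \<le> Lc * nh2 * z2" using bnd z2 by auto
  have e1: "chi1 1 - chi1 0 = E1cs (a + z1 *\<^sub>R ha) (b + z1 *\<^sub>R hb) ha hb - K0 - Lc * nh2 * z1"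
    using z1(3) by simp
  have e2: "chi2 1 - chi2 0 = E1cs (a + z2 *\<^sub>R ha) (b + z2 *\<^sub>R hb) ha hb - K0 + Lc * nh2 * z2"
    using z2(3) by simp
  have "chi1 1 - chi1 0 \<le> 0" using b1 unfolding e1 abs_le_iff by linarith
  moreover have "chi2 1 - chi2 0 \<ge> 0" using b2 unfolding e2 abs_le_iff by linarith
  ultimately have "phi 1 - Lc * nh2 / 2 \<le> phi 0" "phi 0 \<le> phi 1 + Lc * nh2 / 2"
    unfolding chi1_def chi2_def by simp_all
  then have "\<bar>phi 1 - phi 0\<bar> \<le> Lc / 2 * nh2"
    unfolding abs_le_iff by simp
  moreover have "phi 1 - phi 0 = ?Cs (a', b') - ?Cs (a, b) - fst (?G (a, b)) \<bullet> (a' - a) - snd (?G (a, b)) \<bullet> (b' - b)"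
  proof -
    have "K0 = fst (?G (a, b)) \<bullet> ha + snd (?G (a, b)) \<bullet> hb"
      unfolding K0_def by (metis inner_Pair prod.collapse)
    then show ?thesis unfolding phi_def ha_def hb_def by simp
  qed
  ultimately show ?thesis unfolding Lc_def nh2_def ha_def hb_def by simp
qed

lemma S_le: "sqrt (real CARD('n) + real CARD('m) * gam\<^sup>2) \<le> sqrt (real (CARD('n) + CARD('m))) * max 1 gam"
proof -
  have M: "1 \<le> (max 1 gam)\<^sup>2" "gam\<^sup>2 \<le> (max 1 gam)\<^sup>2"
    using gam_nonneg by (auto simp: power_mono)
  have "real CARD('n) + real CARD('m) * gam\<^sup>2 \<le> real (CARD('n) + CARD('m)) * (max 1 gam)\<^sup>2"
  proof -
    have h1: "real CARD('n) * 1 \<le> real CARD('n) * (max 1 gam)\<^sup>2" by (rule mult_left_mono[OF M(1)]) simp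
    have h2: "real CARD('m) * gam\<^sup>2 \<le> real CARD('m) * (max 1 gam)\<^sup>2" by (rule mult_left_mono[OF M(2)]) simp
    have "real CARD('n) + real CARD('m) * gam\<^sup>2 \<le> real CARD('n) * (max 1 gam)\<^sup>2 + real CARD('m) * (max 1 gam)\<^sup>2"
      using h1 h2 by linarith
    also have "\<dots> = real (CARD('n) + CARD('m)) * (max 1 gam)\<^sup>2" by (simp add: distrib_right)
    finally show ?thesis .
  qed
  then have "sqrt (real CARD('n) + real CARD('m) * gam\<^sup>2) \<le> sqrt (real (CARD('n) + CARD('m)) * (max 1 gam)\<^sup>2)"
    by (rule real_sqrt_le_mono)
  also have "\<dots> = sqrt (real (CARD('n) + CARD('m))) * max 1 gam"
    using gam_nonneg by (simp add: real_sqrt_mult)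
  finally show ?thesis .
qed

lemma main:
  "(\<forall>p. smoothed_obj \<sigma> k rel q q0 C w f differentiable (at p)) \<and>
    (\<forall>a a' :: real ^ 'n. \<forall>b b' :: real ^ 'm.
       (\<forall>i. \<bar>a $ i\<bar> \<le> 1) \<longrightarrow> (\<forall>i. \<bar>a' $ i\<bar> \<le> 1) \<longrightarrow>
         \<bar>smoothed_obj \<sigma> k rel q q0 C w f (a', b') - smoothed_obj \<sigma> k rel q q0 C w f (a, b)\<bar>
            \<le> ((\<Sum>c\<in>C. w c) * sqrt (real (CARD('n) + CARD('m))) * max 1 gam) * sqrt ((norm (a' - a))\<^sup>2 + (norm (b' - b))\<^sup>2)
       \<and> norm (grad (smoothed_obj \<sigma> k rel q q0 C w f) (a', b') - grad (smoothed_obj \<sigma> k rel q q0 C w f) (a, b))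
           \<le> (sqrt (real CARD('n) + real CARD('m) * gam\<^sup>2) * ((\<Sum>c\<in>C. w c) * sqrt (real (CARD('n) + CARD('m))) * max 1 gam))
              * sqrt ((norm (a' - a))\<^sup>2 + (norm (b' - b))\<^sup>2)
       \<and> \<bar>smoothed_obj \<sigma> k rel q q0 C w f (a', b') - smoothed_obj \<sigma> k rel q q0 C w f (a, b)
              - fst (grad (smoothed_obj \<sigma> k rel q q0 C w f) (a, b)) \<bullet> (a' - a)
              - snd (grad (smoothed_obj \<sigma> k rel q q0 C w f) (a, b)) \<bullet> (b' - b)\<bar>
           \<le> (sqrt (real CARD('n) + real CARD('m) * gam\<^sup>2) * ((\<Sum>c\<in>C. w c) * sqrt (real (CARD('n) + CARD('m))) * max 1 gam)) / 2
              * ((norm (a' - a))\<^sup>2 + (norm (b' - b))\<^sup>2))"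
proof (intro conjI allI impI)
  fix p show "smoothed_obj \<sigma> k rel q q0 C w f differentiable (at p)" by (rule Cs_differentiable)
next
  let ?S = "sqrt (real CARD('n) + real CARD('m) * gam\<^sup>2)"
  let ?rho = "(\<Sum>c\<in>C. w c) * sqrt (real (CARD('n) + CARD('m))) * max 1 gam"
  fix a a' :: "real ^ 'n" and b b' :: "real ^ 'm"
  assume a: "\<forall>i. \<bar>a $ i\<bar> \<le> 1" and a': "\<forall>i. \<bar>a' $ i\<bar> \<le> 1"
  let ?nh = "sqrt ((norm (a' - a))\<^sup>2 + (norm (b' - b))\<^sup>2)"
  have Sn: "0 \<le> ?S" by simp
  have aS: "(\<Sum>c\<in>C. w c) * ?S \<le> ?rho"
    using mult_left_mono[OF S_le alpha_nonneg] by (simp add: mult.assoc)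
  have aSS: "(\<Sum>c\<in>C. w c) * (?S * ?S) \<le> ?S * ?rho"
    using mult_left_mono[OF aS Sn] by (simp add: mult_ac)
  have nhn: "0 \<le> ?nh" by simp
  show "\<bar>smoothed_obj \<sigma> k rel q q0 C w f (a', b') - smoothed_obj \<sigma> k rel q q0 C w f (a, b)\<bar> \<le> ?rho * ?nh"
  proof -
    have "\<bar>smoothed_obj \<sigma> k rel q q0 C w f (a', b') - smoothed_obj \<sigma> k rel q q0 C w f (a, b)\<bar>
      \<le> (\<Sum>c\<in>C. w c) * (?S * ?nh)" by (rule claim1[OF a a'])
    also have "\<dots> = ((\<Sum>c\<in>C. w c) * ?S) * ?nh" by (simp only: mult.assoc)
    also have "\<dots> \<le> ?rho * ?nh" by (rule mult_right_mono[OF aS nhn])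
    finally show ?thesis .
  qed
  show "norm (grad (smoothed_obj \<sigma> k rel q q0 C w f) (a', b') - grad (smoothed_obj \<sigma> k rel q q0 C w f) (a, b))
      \<le> (?S * ?rho) * ?nh"
    using claim2[OF a a', of b' b] mult_right_mono[OF aSS nhn] by linarith
  show "\<bar>smoothed_obj \<sigma> k rel q q0 C w f (a', b') - smoothed_obj \<sigma> k rel q q0 C w f (a, b)
              - fst (grad (smoothed_obj \<sigma> k rel q q0 C w f) (a, b)) \<bullet> (a' - a)
              - snd (grad (smoothed_obj \<sigma> k rel q q0 C w f) (a, b)) \<bullet> (b' - b)\<bar>
           \<le> (?S * ?rho) / 2 * ((norm (a' - a))\<^sup>2 + (norm (b' - b))\<^sup>2)"
  proof -
    have n2: "0 \<le> (norm (a' - a))\<^sup>2 + (norm (b' - b))\<^sup>2" by simp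
    have "((\<Sum>c\<in>C. w c) * (?S * ?S)) / 2 * ((norm (a' - a))\<^sup>2 + (norm (b' - b))\<^sup>2)
        \<le> (?S * ?rho) / 2 * ((norm (a' - a))\<^sup>2 + (norm (b' - b))\<^sup>2)"
      using aSS n2 by (intro mult_right_mono divide_right_mono) auto
    then show ?thesis using claim3[OF a a', of b' b] by linarith
  qed
qed

end

theorem proposition2:
  fixes \<sigma> :: real and k :: nat
    and rel :: "nat \<Rightarrow> cmp" and q :: "nat \<Rightarrow> real ^ 'm::finite" and q0 :: "nat \<Rightarrow> real"
    and C :: "'c set" and w :: "'c \<Rightarrow> real"
    and f :: "'c \<Rightarrow> ('n::finite \<Rightarrow> real) \<Rightarrow> (nat \<Rightarrow> real) \<Rightarrow> real"
    and A :: "'c \<Rightarrow> nat set"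
  assumes sigma_pos: "\<sigma> > 0"
    and q_nz: "\<forall>i<k. q i \<noteq> 0"
    and C_fin: "finite C"
    and w_pos: "\<forall>c\<in>C. w c > 0"
    and f_pm1: "\<forall>c\<in>C. \<forall>x\<in>cubeN. \<forall>z\<in>cubeK k. f c x z \<in> {-1, 1}"
    and A_atoms: "\<forall>c\<in>C. A c \<subseteq> {..<k}"
    and f_dep: "\<forall>c\<in>C. \<forall>x\<in>cubeN. \<forall>z\<in>cubeK k. \<forall>z'\<in>cubeK k.
                  (\<forall>i\<in>A c. z i = z' i) \<longrightarrow> f c x z = f c x z'"
  shows "let Cs = smoothed_obj \<sigma> k rel q q0 C w f;
      \<alpha> = (\<Sum>c\<in>C. w c);
      \<beta> = Max (insert 0 {card {i \<in> A c. q i $ j \<noteq> 0} | c j. c \<in> C});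
      \<gamma> = sqrt 2 * real \<beta> / (sqrt pi * \<sigma>);
      \<rho> = \<alpha> * sqrt (real (CARD('n) + CARD('m))) * max 1 \<gamma>;
      L = sqrt (real CARD('n) + real CARD('m) * \<gamma>\<^sup>2) * \<rho>
    in (\<forall>p. Cs differentiable (at p)) \<and>
    (\<forall>a a' :: real ^ 'n. \<forall>b b' :: real ^ 'm.
       (\<forall>i. \<bar>a $ i\<bar> \<le> 1) \<longrightarrow> (\<forall>i. \<bar>a' $ i\<bar> \<le> 1) \<longrightarrow>
         \<bar>Cs (a', b') - Cs (a, b)\<bar> \<le> \<rho> * sqrt ((norm (a' - a))\<^sup>2 + (norm (b' - b))\<^sup>2)
       \<and> norm (grad Cs (a', b') - grad Cs (a, b))
           \<le> L * sqrt ((norm (a' - a))\<^sup>2 + (norm (b' - b))\<^sup>2)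
       \<and> \<bar>Cs (a', b') - Cs (a, b) - fst (grad Cs (a, b)) \<bullet> (a' - a)
              - snd (grad Cs (a, b)) \<bullet> (b' - b)\<bar>
           \<le> L / 2 * ((norm (a' - a))\<^sup>2 + (norm (b' - b))\<^sup>2))"
proof -
  interpret prob \<sigma> k rel q q0 C w f A
    using sigma_pos q_nz C_fin w_pos f_pm1 A_atoms f_dep by (rule prob.intro)
  show ?thesis
    unfolding Let_def beta_def[symmetric] gam_def[symmetric] by (rule main)
qed

end
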